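(* Let $X$ and $Y$ be complex Banach spaces with $Y$ densely and continuously embedded in $X$, let $T>0$, and let $\{A(t)\}_{0\le t\le T}\subset G(X)$ satisfy: (1) $\{A(t)\}$ is stable on $X$; (2) for each $t$, $Y$ is $A(t)$-admissible, and the family of parts of $A(t)$ in $Y$ is stable on $Y$; (3) $Y\subset D(A(t))$ for all $t$, and $t\mapsto A(t)$ is continuous from $[0,T]$ into $B[Y,X]$. Let $\{U(t,s)\}_{0\le s\le t\le T}$ be the evolution operators of $\{A(t)\}$. For $n\in\mathbb N$ put $\Delta=T/n$, $t_j=jT/n$, define the piecewise constant family $A_n(t)=A\big(T[nt/T]/n\big)$ for $0\le t\le T$ (where $[s]$ is the greatest integer $\le s$), and define the approximate evolution operators $U_n(t,s)$ for $s\le t$ by $U_n(t,s)=e^{-(t-s)A}$ whenever $s,t$ lie in one interval $[t_{j-1},t_j]$ on which $A_n\equiv A$, extended to all $0\le s\le t\le T$ by the composition rule $U_n(t,r)=U_n(t,s)U_n(s,r)$ for $r\le s\le t$. Then $\sup_{s\in[0,T]}\|A(s)-A_n(s)\|_{B[Y,X]}\to0$ as $n\to\infty$, and there is a constant $C$ independent of $n$, $t$, $r$ and $g$ such that for all $0\le r<t\le T$ and all $g\in Y$, $$\|U(t,r)g-U_n(t,r)g\|_X\le C\|g\|_Y\,(t-r)\sup_{s\in[0,T]}\|A(s)-A_n(s)\|_{B[Y,X]}.$$ In particular, if $t,r\in[t_{j-1},t_j]$ for some $j$, then $\|U(t,r)g-U_n(t,r)g\|_X=o(\Delta)\,\|g\|_Y$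 as $\Delta\to0$, uniformly in $j$.
   Context: $G(X)$ denotes the set of negative generators of $C_0$-semigroups on $X$, i.e. operators $A$ such that $-A$ generates a $C_0$-semigroup $\{e^{-tA}\}_{t\ge0}$. $B[Y,X]$ is the space of bounded linear operators from $Y$ to $X$ with operator norm. A family $\{A(t)\}_{0\le t\le T}\subset G(X)$ is stable if there are constants $M\ge 1$, $\omega\in\mathbb R$ such that $\big\|\prod_{j=1}^k[A(t_j)+\lambda]^{-1}\big\|\le M(\lambda-\omega)^{-k}$ for all $\lambda>\omega$, all $k$, and all $0\le t_1\le\dots\le t_k\le T$, where the product is time-ordered: $[A(t_\ell)+\lambda]^{-1}$ stands to the left of $[A(t_j)+\lambda]^{-1}$ when $\ell>j$. For $A\in G(X)$, $Y$ is $A$-admissible if $e^{-tA}Y\subset Y$ for all $t\ge0$ and the restrictions $\{e^{-tA}|_Y\}$ form a $C_0$-semigroup on $Y$. Under hypotheses (1)–(3) there is a unique family of bounded operators $U(t,s)$ on $X$, $0\le s\le t\le T$ (the evolution operators), strongly continuous in $(t,s)$, with $U(s,s)=I$, $\|U(t,s)\|_X\le Me^{\omega(t-s)}$, $U(t,r)=U(t,s)U(s,r)$ for $r\le s\le t$, right derivative $[D_t^+U(t,s)g]_{t=s}=-A(s)g$ for $g\in Y$, and $\frac{d}{ds}U(t,s)g=U(t,s)A(s)g$ for $g\in Y$. *)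

theory Defs
  imports "HOL-Analysis.Analysis"
begin

text \<open>Complex Banach spaces: HOL has no class of complex normed spaces, so a complex
Banach space is a real Banach space together with a multiplication by the imaginary
unit (a real-linear map ci with ci (ci x) = -x and norm((a+ib)x) = |a+ib| norm x).
Complex-linear operators are real-linear operators commuting with ci.\<close>

definition complex_structure :: "('a::real_normed_vector \<Rightarrow> 'a) \<Rightarrow> bool" where
  "complex_structure ci \<longleftrightarrow> bounded_linear ci \<and> (\<forall>x. ci (ci x) = - x) \<and>
     (\<forall>a b x. norm (a *\<^sub>R x + b *\<^sub>R ci x) = cmod (Complex a b) * norm x)"

text \<open>C0-semigroup on a Banach space (values at negative times are irrelevant).\<close>

definition C0_semigroup :: "(real \<Rightarrow> 'a::real_normed_vector \<Rightarrow> 'a) \<Rightarrow> bool" where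
  "C0_semigroup S \<longleftrightarrow> (\<forall>t\<ge>0. bounded_linear (S t)) \<and> S 0 = id \<and>
     (\<forall>t\<ge>0. \<forall>s\<ge>0. S (t + s) = S t \<circ> S s) \<and>
     (\<forall>x. continuous_on {0..} (\<lambda>t. S t x))"

text \<open>The (possibly unbounded) operator A with domain D is a negative generator of the
C0-semigroup S, i.e. -A is its infinitesimal generator; thus S t = e^{-tA}.\<close>

definition neg_generator :: "'a set \<Rightarrow> ('a \<Rightarrow> 'a) \<Rightarrow> (real \<Rightarrow> 'a::real_normed_vector \<Rightarrow> 'a) \<Rightarrow> bool" where
  "neg_generator D A S \<longleftrightarrow> C0_semigroup S \<and>
     D = {x. \<exists>l. ((\<lambda>h. (1 / h) *\<^sub>R (S h x - x)) \<longlongrightarrow> l) (at_right 0)} \<and>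
     (\<forall>x\<in>D. ((\<lambda>h. (1 / h) *\<^sub>R (S h x - x)) \<longlongrightarrow> - A x) (at_right 0))"

definition is_resolvent :: "'a set \<Rightarrow> ('a \<Rightarrow> 'a) \<Rightarrow> real \<Rightarrow> ('a::real_normed_vector \<Rightarrow> 'a) \<Rightarrow> bool" where
  "is_resolvent D A lam R \<longleftrightarrow> bounded_linear R \<and>
     (\<forall>x. R x \<in> D \<and> A (R x) + lam *\<^sub>R R x = x) \<and>
     (\<forall>x\<in>D. R (A x + lam *\<^sub>R x) = x)"

definition resolvent :: "'a set \<Rightarrow> ('a \<Rightarrow> 'a) \<Rightarrow> real \<Rightarrow> ('a::real_normed_vector \<Rightarrow> 'a)" where
  "resolvent D A lam = (THE R. is_resolvent D A lam R)"

text \<open>Time-ordered product over a nondecreasing list [t_1,...,t_k]: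
[A(t_k)+\<lambda>]^{-1} \<circ> ... \<circ> [A(t_1)+\<lambda>]^{-1}.\<close>

definition res_prod :: "(real \<Rightarrow> 'a set) \<Rightarrow> (real \<Rightarrow> 'a \<Rightarrow> 'a) \<Rightarrow> real \<Rightarrow> real list \<Rightarrow> ('a::real_normed_vector \<Rightarrow> 'a)" where
  "res_prod D A lam ts = fold (\<lambda>t f. resolvent (D t) (A t) lam \<circ> f) ts id"

definition stable :: "real \<Rightarrow> (real \<Rightarrow> 'a::real_normed_vector set) \<Rightarrow> (real \<Rightarrow> 'a \<Rightarrow> 'a) \<Rightarrow> bool" where
  "stable T D A \<longleftrightarrow> (\<exists>M \<omega>. M \<ge> 1 \<and>
     (\<forall>lam>\<omega>. \<forall>t\<in>{0..T}. \<exists>R. is_resolvent (D t) (A t) lam R) \<and>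
     (\<forall>lam>\<omega>. \<forall>ts. sorted ts \<and> set ts \<subseteq> {0..T} \<longrightarrow>
        onorm (res_prod D A lam ts) \<le> M / (lam - \<omega>) ^ length ts))"

text \<open>Part in Y of an operator (D, A) on X, Y embedded into X by J.\<close>

definition part_dom :: "('y \<Rightarrow> 'x) \<Rightarrow> 'x set \<Rightarrow> ('x \<Rightarrow> 'x) \<Rightarrow> 'y set" where
  "part_dom J D A = {y. J y \<in> D \<and> A (J y) \<in> range J}"

definition part_op :: "('y \<Rightarrow> 'x) \<Rightarrow> ('x \<Rightarrow> 'x) \<Rightarrow> 'y \<Rightarrow> 'y" where
  "part_op J A y = inv J (A (J y))"

definition admissible :: "('y::real_normed_vector \<Rightarrow> 'x) \<Rightarrow> (real \<Rightarrow> 'x \<Rightarrow> 'x) \<Rightarrow> bool" where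
  "admissible J S \<longleftrightarrow> (\<exists>SY. C0_semigroup SY \<and> (\<forall>t\<ge>0. \<forall>y. J (SY t y) = S t (J y)))"

definition grid :: "real \<Rightarrow> nat \<Rightarrow> nat \<Rightarrow> real" where
  "grid T n m = real m * T / real n"

definition Aapp :: "real \<Rightarrow> (real \<Rightarrow> 'x \<Rightarrow> 'x) \<Rightarrow> nat \<Rightarrow> real \<Rightarrow> 'x \<Rightarrow> 'x" where
  "Aapp T A n t = A (T * real_of_int \<lfloor>real n * t / T\<rfloor> / real n)"

text \<open>Approximate evolution operator U_n(t,s), s \<le> t: the time-ordered composition
over the grid intervals [t_m, t_{m+1}] of e^{-\<ell>_m A(t_m)}, with \<ell>_m the length of
[s,t] \<inter> [t_m,t_{m+1}] (factors with \<ell>_m = 0 are the identity).  On a single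
grid interval this is e^{-(t-s)A(t_{j-1})}, and it satisfies the composition rule.\<close>

definition Uapp :: "real \<Rightarrow> (real \<Rightarrow> real \<Rightarrow> 'x \<Rightarrow> 'x) \<Rightarrow> nat \<Rightarrow> real \<Rightarrow> real \<Rightarrow> 'x \<Rightarrow> 'x" where
  "Uapp T S n t s = fold (\<lambda>m f. S (grid T n m)
       (max 0 (min t (grid T n (Suc m)) - max s (grid T n m))) \<circ> f) [0..<n] id"

definition dist_AAn :: "real \<Rightarrow> ('y::real_normed_vector \<Rightarrow> 'x::real_normed_vector) \<Rightarrow> (real \<Rightarrow> 'x \<Rightarrow> 'x) \<Rightarrow> nat \<Rightarrow> real" where
  "dist_AAn T J A n = (SUP s\<in>{0..T}. onorm (\<lambda>y. A s (J y) - Aapp T A n s (J y)))"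

end

theory Submission
  imports Defs
begin


lemma eventually_at_within_not_equal': "eventually (\<lambda>y. y \<noteq> x) (at x within s)"
  by (simp add: eventually_at_filter)

lemma hvd_quot_iff:
  fixes f :: "real \<Rightarrow> 'a::real_normed_vector"
  shows "(f has_vector_derivative d) (at x within s) \<longleftrightarrow>
         ((\<lambda>y. (1 / (y - x)) *\<^sub>R (f y - f x)) \<longlongrightarrow> d) (at x within s)"
proof -
  have eq: "\<forall>\<^sub>F y in at x within s. norm ((f y - f x) - (y - x) *\<^sub>R d) / norm (y - x)
       = norm ((1 / (y - x)) *\<^sub>R (f y - f x) - d)"
  proof (rule eventually_mono[OF eventually_at_within_not_equal'])
    fix y assume "y \<noteq> x"
    then have nz: "y - x \<noteq> 0" by simp
    have "(f y - f x) - (y - x) *\<^sub>R d = (y - x) *\<^sub>R ((1 / (y - x)) *\<^sub>R (f y - f x) - d)"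
      using nz by (simp add: algebra_simps)
    then show "norm ((f y - f x) - (y - x) *\<^sub>R d) / norm (y - x)
       = norm ((1 / (y - x)) *\<^sub>R (f y - f x) - d)"
      using nz by simp
  qed
  have "(f has_vector_derivative d) (at x within s) \<longleftrightarrow>
        ((\<lambda>y. norm ((f y - f x) - (y - x) *\<^sub>R d) / norm (y - x)) \<longlongrightarrow> 0) (at x within s)"
    unfolding has_vector_derivative_def has_derivative_iff_norm
    by (simp add: bounded_linear_scaleR_left)
  also have "\<dots> \<longleftrightarrow> ((\<lambda>y. norm ((1 / (y - x)) *\<^sub>R (f y - f x) - d)) \<longlongrightarrow> 0) (at x within s)"
    using tendsto_cong[OF eq] by simp
  also have "\<dots> \<longleftrightarrow> ((\<lambda>y. (1 / (y - x)) *\<^sub>R (f y - f x)) \<longlongrightarrow> d) (at x within s)"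
    by (simp add: tendsto_norm_zero_iff LIM_zero_iff)
  finally show ?thesis .
qed


lemma ubp:
  fixes T :: "'i \<Rightarrow> 'a::banach \<Rightarrow> 'b::real_normed_vector"
  assumes lin: "\<And>i. i \<in> I \<Longrightarrow> bounded_linear (T i)"
    and pw: "\<And>x. \<exists>B. \<forall>i\<in>I. norm (T i x) \<le> B"
  shows "\<exists>K. \<forall>i\<in>I. \<forall>x. norm (T i x) \<le> K * norm x"
proof -
  define E where "E n = {x. \<forall>i\<in>I. norm (T i x) \<le> real n}" for n :: nat
  have clE: "closed (E n)" for n
  proof -
    have "E n = (\<Inter>i\<in>I. {x. norm (T i x) \<le> real n})" by (auto simp: E_def)
    moreover have "closed {x. norm (T i x) \<le> real n}" if "i \<in> I" for i
      using lin[OF that]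
      by (intro closed_Collect_le continuous_intros) (auto intro: linear_continuous_on)
    ultimately show ?thesis by auto
  qed
  have UE: "(\<Union>n. E n) = UNIV"
  proof safe
    fix x
    obtain B where B: "\<forall>i\<in>I. norm (T i x) \<le> B" using pw by blast
    obtain n where "B \<le> real n" using real_arch_simple by blast
    then have "x \<in> E n" using B by (auto simp: E_def)
    then show "x \<in> (\<Union>n. E n)" by blast
  qed auto
  have "\<exists>n. interior (E n) \<noteq> {}"
  proof (rule ccontr)
    assume "\<not> ?thesis"
    then have "euclidean interior_of \<Union>(range E) = {}"
      by (intro Baire_category_alt) (auto simp: completely_metrizable_space_euclidean clE closed_closedin[symmetric])
    then show False using UE by simp
  qed
  then obtain n x0 where "x0 \<in> interior (E n)" by blast
  then obtain r where r: "r > 0" "ball x0 r \<subseteq> E n"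
    by (meson open_contains_ball_eq open_interior interior_subset subset_trans)
  have x0E: "x0 \<in> E n" using r by auto
  have "\<forall>i\<in>I. \<forall>x. norm (T i x) \<le> (4 * real n / r) * norm x"
  proof (intro ballI allI)
    fix i x assume i: "i \<in> I"
    interpret L: bounded_linear "T i" using lin[OF i] .
    show "norm (T i x) \<le> (4 * real n / r) * norm x"
    proof (cases "x = 0")
      case True then show ?thesis by simp
    next
      case False
      define c where "c = r / (2 * norm x)"
      have c: "c > 0" using False r by (simp add: c_def)
      have "norm (c *\<^sub>R x) = r / 2" using False r by (simp add: c_def)
      then have "x0 + c *\<^sub>R x \<in> ball x0 r" using r by (simp add: dist_norm)
      then have "x0 + c *\<^sub>R x \<in> E n" using r by auto
      then have a: "norm (T i (x0 + c *\<^sub>R x)) \<le> real n" using i by (auto simp: E_def)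
      have b: "norm (T i x0) \<le> real n" using x0E i by (auto simp: E_def)
      have "c * norm (T i x) = norm (T i (x0 + c *\<^sub>R x) - T i x0)"
        using c by (simp add: L.add L.scale)
      also have "\<dots> \<le> 2 * real n" using a b norm_triangle_ineq4[of "T i (x0 + c *\<^sub>R x)" "T i x0"] by linarith
      finally have "norm (T i x) \<le> 2 * real n / c" using c by (simp add: field_simps)
      also have "\<dots> = (4 * real n / r) * norm x" using False r by (simp add: c_def field_simps)
      finally show ?thesis .
    qed
  qed
  then show ?thesis by blast
qed


lemma filterlim_at_left_to_0:
  fixes t :: real
  shows "filterlim g F (at_left t) \<longleftrightarrow> filterlim (\<lambda>h. g (t - h)) F (at_right 0)"
  unfolding filterlim_at_left_to_right filterlim_at_right_to_0[of _ _ "-t"] by simp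

lemma C0D:
  assumes "C0_semigroup S"
  shows "\<And>t. t \<ge> 0 \<Longrightarrow> bounded_linear (S t)" "S 0 = id"
    "\<And>t s. t \<ge> 0 \<Longrightarrow> s \<ge> 0 \<Longrightarrow> S (t + s) = S t \<circ> S s"
    "\<And>x. continuous_on {0..} (\<lambda>t. S t x)"
  using assms unfolding C0_semigroup_def by auto

lemma C0_comm:
  assumes "C0_semigroup S" "t \<ge> 0" "s \<ge> 0"
  shows "S t (S s x) = S s (S t x)"
proof -
  have "S t (S s x) = S (t + s) x" using C0D(3)[OF assms(1) assms(2,3)] by simp
  also have "\<dots> = S (s + t) x" by (simp add: add.commute)
  also have "\<dots> = S s (S t x)" using C0D(3)[OF assms(1) assms(3,2)] by simp
  finally show ?thesis .
qed

lemma C0_local_bound: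
  fixes S :: "real \<Rightarrow> 'a::banach \<Rightarrow> 'a"
  assumes "C0_semigroup S"
  shows "\<exists>K\<ge>0. \<forall>t\<in>{0..c}. \<forall>x. norm (S t x) \<le> K * norm x"
proof -
  have "\<exists>K. \<forall>t\<in>{0..c}. \<forall>x. norm (S t x) \<le> K * norm x"
  proof (rule ubp)
    show "\<And>t. t \<in> {0..c} \<Longrightarrow> bounded_linear (S t)" using C0D(1)[OF assms] by auto
    fix x
    have "compact ((\<lambda>t. S t x) ` {0..c})"
      by (rule compact_continuous_image)
         (auto intro: continuous_on_subset[OF C0D(4)[OF assms]])
    then obtain B where "\<forall>y\<in>(\<lambda>t. S t x) ` {0..c}. norm y \<le> B"
      using compact_imp_bounded bounded_iff by metis
    then show "\<exists>B. \<forall>t\<in>{0..c}. norm (S t x) \<le> B" by blast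
  qed
  then obtain K where K: "\<forall>t\<in>{0..c}. \<forall>x. norm (S t x) \<le> K * norm x" by blast
  have "\<forall>t\<in>{0..c}. \<forall>x. norm (S t x) \<le> max K 0 * norm x"
  proof (intro ballI allI)
    fix t x assume "t \<in> {0..c}"
    then have "norm (S t x) \<le> K * norm x" using K by blast
    also have "\<dots> \<le> max K 0 * norm x" by (intro mult_right_mono) auto
    finally show "norm (S t x) \<le> max K 0 * norm x" .
  qed
  then show ?thesis by (intro exI[of _ "max K 0"]) auto
qed

definition quot :: "(real \<Rightarrow> 'a::real_normed_vector \<Rightarrow> 'a) \<Rightarrow> 'a \<Rightarrow> real \<Rightarrow> 'a" where
  "quot S x h = (1 / h) *\<^sub>R (S h x - x)"

lemma genD:
  assumes "neg_generator D A S" "x \<in> D"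
  shows "(quot S x \<longlongrightarrow> - A x) (at_right 0)"
  using assms unfolding neg_generator_def quot_def by auto

lemma genI:
  assumes "neg_generator D A S" "(quot S x \<longlongrightarrow> l) (at_right 0)"
  shows "x \<in> D" "A x = - l"
proof -
  show xD: "x \<in> D" using assms unfolding neg_generator_def quot_def by auto
  have "(quot S x \<longlongrightarrow> - A x) (at_right 0)" using genD[OF assms(1) xD] .
  from tendsto_unique[OF _ this assms(2)] show "A x = - l" by (simp add: minus_equation_iff)
qed

lemma gen_C0: "neg_generator D A S \<Longrightarrow> C0_semigroup S"
  unfolding neg_generator_def by simp

lemma gen_subspace:
  assumes g: "neg_generator D A S"
  shows "0 \<in> D" "A 0 = 0"
    "\<And>x y. x \<in> D \<Longrightarrow> y \<in> D \<Longrightarrow> x + y \<in> D \<and> A (x + y) = A x + A y"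
    "\<And>x c. x \<in> D \<Longrightarrow> c *\<^sub>R x \<in> D \<and> A (c *\<^sub>R x) = c *\<^sub>R A x"
proof -
  have C: "C0_semigroup S" using gen_C0[OF g] .
  have lin: "\<And>h. h \<ge> 0 \<Longrightarrow> linear (S h)" using C0D(1)[OF C] bounded_linear.linear by blast
  have ev: "\<forall>\<^sub>F h in at_right (0::real). h > 0" by (simp add: eventually_at_right_less)
  have "\<forall>\<^sub>F h in at_right (0::real). quot S 0 h = 0"
    using ev by eventually_elim (simp add: quot_def linear_0[OF lin])
  then have "(quot S 0 \<longlongrightarrow> - 0) (at_right 0)" by (simp add: tendsto_eventually)
  from genI[OF g this] show "0 \<in> D" "A 0 = 0" by auto
  fix x y assume x: "x \<in> D"
  {
    assume y: "y \<in> D"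
    have "\<forall>\<^sub>F h in at_right (0::real). quot S (x + y) h = quot S x h + quot S y h"
      using ev by eventually_elim (simp add: quot_def linear_add[OF lin] algebra_simps)
    moreover have "((\<lambda>h. quot S x h + quot S y h) \<longlongrightarrow> - A x + - A y) (at_right 0)"
      by (intro tendsto_add genD[OF g] x y)
    ultimately have "(quot S (x + y) \<longlongrightarrow> - (A x + A y)) (at_right 0)"
      by (simp add: tendsto_cong)
    from genI[OF g this] show "x + y \<in> D \<and> A (x + y) = A x + A y" by auto
  }
  fix c :: real
  have "\<forall>\<^sub>F h in at_right (0::real). quot S (c *\<^sub>R x) h = c *\<^sub>R quot S x h"
    using ev by eventually_elim (simp add: quot_def linear_scale[OF lin] algebra_simps)
  moreover have "((\<lambda>h. c *\<^sub>R quot S x h) \<longlongrightarrow> c *\<^sub>R - A x) (at_right 0)"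
    by (intro tendsto_scaleR tendsto_const genD[OF g] x)
  ultimately have "(quot S (c *\<^sub>R x) \<longlongrightarrow> - (c *\<^sub>R A x)) (at_right 0)"
    by (simp add: tendsto_cong)
  from genI[OF g this] show "c *\<^sub>R x \<in> D \<and> A (c *\<^sub>R x) = c *\<^sub>R A x" by auto
qed

lemma gen_diff:
  assumes g: "neg_generator D A S" and "x \<in> D" "y \<in> D"
  shows "x - y \<in> D" "A (x - y) = A x - A y"
proof -
  have 1: "(-1) *\<^sub>R y \<in> D" "A ((-1) *\<^sub>R y) = (-1) *\<^sub>R A y" using gen_subspace(4)[OF g assms(3), of "-1"] by simp_all
  have 2: "x + (-1) *\<^sub>R y \<in> D" "A (x + (-1) *\<^sub>R y) = A x + A ((-1) *\<^sub>R y)"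
    using gen_subspace(3)[OF g assms(2) 1(1)] by auto
  have e: "x + (-1) *\<^sub>R y = x - y" by simp
  show "x - y \<in> D" using 2(1) unfolding e .
  show "A (x - y) = A x - A y" using 2(2) 1(2) unfolding e by simp
qed

lemma gen_invariant:
  assumes g: "neg_generator D A S" and x: "x \<in> D" and t: "t \<ge> 0"
  shows "S t x \<in> D" "A (S t x) = S t (A x)"
proof -
  have C: "C0_semigroup S" using gen_C0[OF g] .
  interpret L: bounded_linear "S t" using C0D(1)[OF C t] .
  have ev: "\<forall>\<^sub>F h in at_right (0::real). h > 0" by (simp add: eventually_at_right_less)
  have "\<forall>\<^sub>F h in at_right (0::real). quot S (S t x) h = S t (quot S x h)"
    using ev by eventually_elim (simp add: quot_def L.scale L.diff C0_comm[OF C _ t])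
  moreover have "((\<lambda>h. S t (quot S x h)) \<longlongrightarrow> S t (- A x)) (at_right 0)"
    by (intro L.tendsto genD[OF g x])
  ultimately have "(quot S (S t x) \<longlongrightarrow> - S t (A x)) (at_right 0)"
    by (simp add: tendsto_cong L.neg)
  from genI[OF g this] show "S t x \<in> D" "A (S t x) = S t (A x)" by auto
qed


lemma gen_deriv:
  fixes S :: "real \<Rightarrow> 'a::banach \<Rightarrow> 'a"
  assumes g: "neg_generator D A S" and x: "x \<in> D" and t: "t \<ge> 0"
  shows "((\<lambda>s. S s x) has_vector_derivative - S t (A x)) (at t within {0..})"
proof -
  have C: "C0_semigroup S" using gen_C0[OF g] .
  interpret L: bounded_linear "S t" using C0D(1)[OF C t] .
  let ?Q = "\<lambda>y. (1 / (y - t)) *\<^sub>R (S y x - S t x)"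
  have right: "(?Q \<longlongrightarrow> - S t (A x)) (at t within {t..})"
  proof -
    have "\<forall>\<^sub>F h in at_right (0::real). h > 0" by (simp add: eventually_at_right_less)
    then have "\<forall>\<^sub>F h in at_right (0::real). ?Q (h + t) = S t (quot S x h)"
    proof eventually_elim
      case (elim h)
      have "S (h + t) x = S t (S h x)" using C0D(3)[OF C t, of h] elim by (simp add: add.commute)
      then show ?case by (simp add: quot_def L.scale L.diff)
    qed
    moreover have "((\<lambda>h. S t (quot S x h)) \<longlongrightarrow> - S t (A x)) (at_right 0)"
      using L.tendsto[OF genD[OF g x]] by (simp add: L.neg)
    ultimately have "((\<lambda>h. ?Q (h + t)) \<longlongrightarrow> - S t (A x)) (at_right 0)"
      by (simp add: tendsto_cong)
    then show ?thesis unfolding at_within_Ici_at_right filterlim_at_right_to_0[of _ _ t] .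
  qed
  have left: "(?Q \<longlongrightarrow> - S t (A x)) (at t within {0..<t})"
  proof (cases "t = 0")
    case True then show ?thesis by simp
  next
    case False
    then have tp: "t > 0" using t by simp
    obtain K where K: "K \<ge> 0" "\<forall>s\<in>{0..t}. \<forall>y. norm (S s y) \<le> K * norm y"
      using C0_local_bound[OF C] by blast
    have ev: "\<forall>\<^sub>F h in at_right (0::real). 0 < h \<and> h < t"
      using tp by (simp add: eventually_at_right_field) (metis)
    have eq: "\<forall>\<^sub>F h in at_right (0::real). ?Q (t - h) = S (t - h) (quot S x h)"
      using ev
    proof eventually_elim
      case (elim h)
      interpret L2: bounded_linear "S (t - h)" using C0D(1)[OF C] elim by simp
      have "S t x = S (t - h) (S h x)" using C0D(3)[OF C, of "t - h" h] elim by simp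
      then show ?case using elim by (simp add: quot_def L2.scale L2.diff algebra_simps)
    qed
    have bnd: "\<forall>\<^sub>F h in at_right (0::real). norm (S (t - h) (quot S x h) - S t (- A x))
         \<le> K * norm (quot S x h + A x) + norm (S (t - h) (- A x) - S t (- A x))"
      using ev
    proof eventually_elim
      case (elim h)
      interpret L2: bounded_linear "S (t - h)" using C0D(1)[OF C] elim by simp
      have "S (t - h) (quot S x h) - S t (- A x) =
            S (t - h) (quot S x h + A x) + (S (t - h) (- A x) - S t (- A x))"
        by (simp add: L2.add L2.neg)
      also have "norm \<dots> \<le> norm (S (t - h) (quot S x h + A x)) + norm (S (t - h) (- A x) - S t (- A x))"
        by (rule norm_triangle_ineq)
      also have "norm (S (t - h) (quot S x h + A x)) \<le> K * norm (quot S x h + A x)"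
        using K elim by auto
      finally show ?case by simp
    qed
    have c1: "((\<lambda>h. quot S x h + A x) \<longlongrightarrow> 0) (at_right 0)"
      using tendsto_add[OF genD[OF g x] tendsto_const[of "A x"]] by simp
    have c2: "((\<lambda>h. S (t - h) (- A x)) \<longlongrightarrow> S t (- A x)) (at_right 0)"
    proof (rule filterlim_compose[of "\<lambda>s. S s (- A x)"])
      show "((\<lambda>s. S s (- A x)) \<longlongrightarrow> S t (- A x)) (at t within {0..})"
        using C0D(4)[OF C, of "- A x"] t unfolding continuous_on_def by auto
      show "filterlim (\<lambda>h. t - h) (at t within {0..}) (at_right 0)"
        unfolding filterlim_at
      proof
        show "\<forall>\<^sub>F h in at_right 0. t - h \<in> {0..} \<and> t - h \<noteq> t"
          using ev by eventually_elim auto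
        have "((\<lambda>h. t - h) \<longlongrightarrow> t - 0) (at_right 0)"
          by (intro tendsto_intros)
        then show "((\<lambda>h. t - h) \<longlongrightarrow> t) (at_right 0)" by simp
      qed
    qed
    have "((\<lambda>h. K * norm (quot S x h + A x) + norm (S (t - h) (- A x) - S t (- A x))) \<longlongrightarrow>
            K * norm (0::'a) + norm (S t (- A x) - S t (- A x))) (at_right 0)"
      by (intro tendsto_intros c1 c2)
    then have "((\<lambda>h. S (t - h) (quot S x h) - S t (- A x)) \<longlongrightarrow> 0) (at_right 0)"
      by (intro Lim_null_comparison[OF bnd]) simp
    then have "((\<lambda>h. S (t - h) (quot S x h)) \<longlongrightarrow> S t (- A x)) (at_right 0)"
      by (simp add: LIM_zero_iff)
    then have "((\<lambda>h. ?Q (t - h)) \<longlongrightarrow> - S t (A x)) (at_right 0)"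
      using eq by (simp add: tendsto_cong L.neg)
    then have "(?Q \<longlongrightarrow> - S t (A x)) (at_left t)"
      unfolding filterlim_at_left_to_0 .
    then show ?thesis by (rule tendsto_within_subset) auto
  qed
  have "{0..} = {0..<t} \<union> {t..}" using t by auto
  then show ?thesis unfolding hvd_quot_iff using Lim_within_Un[of ?Q _ t "{0..<t}" "{t..}"] left right by simp
qed


lemma int_avg_lim:
  fixes f :: "real \<Rightarrow> 'a::banach"
  assumes "continuous_on {p..b} f" "p < b"
  shows "((\<lambda>d. (1 / d) *\<^sub>R integral {p..p + d} f) \<longlongrightarrow> f p) (at_right 0)"
proof -
  have "((\<lambda>u. integral {p..u} f) has_vector_derivative f p) (at p within {p..b})"
    using integral_has_vector_derivative[OF assms(1)] assms(2) by auto
  then have "((\<lambda>u. (1 / (u - p)) *\<^sub>R (integral {p..u} f - integral {p..p} f)) \<longlongrightarrow> f p) (at_right p)"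
    unfolding hvd_quot_iff at_within_Icc_at_right[OF assms(2)] .
  then have "((\<lambda>u. (1 / (u - p)) *\<^sub>R integral {p..u} f) \<longlongrightarrow> f p) (at_right p)"
    by simp
  then show ?thesis unfolding filterlim_at_right_to_0[of _ _ p] by (simp add: add.commute)
qed

lemma C0_cont_on: "C0_semigroup S \<Longrightarrow> continuous_on {a..b} (\<lambda>t. S t z)" if "a \<ge> 0"
  using that by (auto intro: continuous_on_subset[OF C0D(4)])

definition avg :: "(real \<Rightarrow> 'a::banach \<Rightarrow> 'a) \<Rightarrow> real \<Rightarrow> 'a \<Rightarrow> 'a" where
  "avg S h z = (1 / h) *\<^sub>R integral {0..h} (\<lambda>t. S t z)"

lemma avg_lim:
  fixes S :: "real \<Rightarrow> 'a::banach \<Rightarrow> 'a"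
  assumes C: "C0_semigroup S"
  shows "((\<lambda>h. avg S h z) \<longlongrightarrow> z) (at_right 0)"
proof -
  have "((\<lambda>d. (1 / d) *\<^sub>R integral {0..0 + d} (\<lambda>t. S t z)) \<longlongrightarrow> S 0 z) (at_right 0)"
    by (rule int_avg_lim[OF C0_cont_on[OF _ C], where b=1]) auto
  then show ?thesis using C0D(2)[OF C] by (simp add: avg_def)
qed

lemma avg_gen:
  fixes S :: "real \<Rightarrow> 'a::banach \<Rightarrow> 'a"
  assumes g: "neg_generator D A S" and h: "h > 0"
  shows "avg S h z \<in> D" "A (avg S h z) = (1 / h) *\<^sub>R (z - S h z)"
proof -
  have C: "C0_semigroup S" using gen_C0[OF g] .
  define f where "f t = S t z" for t
  have cf: "continuous_on {a..b} f" if "a \<ge> 0" for a b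
    unfolding f_def using C0_cont_on[OF that C] .
  have intf: "f integrable_on {a..b}" if "a \<ge> 0" for a b
    by (rule integrable_continuous_real[OF cf[OF that]])
  have key: "\<forall>\<^sub>F d in at_right (0::real). quot S (avg S h z) d
      = (1 / h) *\<^sub>R ((1 / d) *\<^sub>R integral {h..h + d} f - (1 / d) *\<^sub>R integral {0..0 + d} f)"
  proof -
    have "\<forall>\<^sub>F d in at_right (0::real). d > 0" by (simp add: eventually_at_right_less)
    then show ?thesis
    proof eventually_elim
      case (elim d)
      interpret L: bounded_linear "S d" using C0D(1)[OF C] elim by simp
      have "S d (integral {0..h} f) = integral {0..h} (S d \<circ> f)"
        using integral_linear[OF intf[of 0 h] L.bounded_linear] by simp
      also have "\<dots> = integral {0..h} (f \<circ> (+) d)"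
      proof (rule integral_cong)
        fix t assume "t \<in> {0..h}"
        then show "(S d \<circ> f) t = (f \<circ> (+) d) t"
          using C0D(3)[OF C, of d t] elim by (simp add: f_def add.commute)
      qed
      also have "\<dots> = integral {0 + d..h + d} f"
        by (rule integral_shift_Icc_real)
      finally have e1: "S d (integral {0..h} f) = integral {d..h + d} f" by simp
      have e2: "integral {0..d} f + integral {d..h + d} f = integral {0..h + d} f"
        using elim h intf[of 0 "h + d"] by (intro Henstock_Kurzweil_Integration.integral_combine) simp_all
      have e3: "integral {0..h} f + integral {h..h + d} f = integral {0..h + d} f"
        using elim h intf[of 0 "h + d"] by (intro Henstock_Kurzweil_Integration.integral_combine) simp_all
      have "S d (integral {0..h} f) - integral {0..h} f = integral {h..h + d} f - integral {0..d} f"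
      proof -
        have a: "integral {d..h + d} f = integral {0..h + d} f - integral {0..d} f"
          using e2 by (metis add_diff_cancel_left')
        have b: "integral {0..h} f = integral {0..h + d} f - integral {h..h + d} f"
          using e3 by (metis add_diff_cancel)
        show ?thesis by (simp only: e1, simp only: a b) (simp add: algebra_simps)
      qed
      note E = this
      have q: "quot S (avg S h z) d = (1 / d) *\<^sub>R ((1 / h) *\<^sub>R (S d (integral {0..h} f) - integral {0..h} f))"
        unfolding quot_def avg_def f_def[symmetric] by (simp add: L.scale scaleR_diff_right)
      show ?case unfolding q E by (simp add: scaleR_diff_right mult.commute)
    qed
  qed
  have l1: "((\<lambda>d. (1 / d) *\<^sub>R integral {h..h + d} f) \<longlongrightarrow> f h) (at_right 0)"
    by (rule int_avg_lim[OF cf, of h "h + 1"]) (use h in auto)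
  have l2: "((\<lambda>d. (1 / d) *\<^sub>R integral {0..0 + d} f) \<longlongrightarrow> f 0) (at_right 0)"
    by (rule int_avg_lim[OF cf, of 0 1]) auto
  have "((\<lambda>d. (1 / h) *\<^sub>R ((1 / d) *\<^sub>R integral {h..h + d} f - (1 / d) *\<^sub>R integral {0..0 + d} f))
         \<longlongrightarrow> (1 / h) *\<^sub>R (f h - f 0)) (at_right 0)"
    by (intro tendsto_intros l1 l2)
  then have "(quot S (avg S h z) \<longlongrightarrow> (1 / h) *\<^sub>R (f h - f 0)) (at_right 0)"
    using key by (simp add: tendsto_cong)
  from genI[OF g this] show "avg S h z \<in> D" "A (avg S h z) = (1 / h) *\<^sub>R (z - S h z)"
    using C0D(2)[OF C] by (auto simp: f_def algebra_simps)
qed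

lemma gen_dense2:
  fixes S :: "real \<Rightarrow> 'a::banach \<Rightarrow> 'a"
  assumes g: "neg_generator D A S"
  shows "closure {x \<in> D. A x \<in> D} = UNIV"
proof -
  have C: "C0_semigroup S" using gen_C0[OF g] .
  have ev: "\<forall>\<^sub>F h in at_right (0::real). h > 0" by (simp add: eventually_at_right_less)
  have atr_nb: "at_right (0::real) \<noteq> bot" by simp
  have sub1: "D \<subseteq> closure {x \<in> D. A x \<in> D}"
  proof
    fix z assume z: "z \<in> D"
    have "\<forall>\<^sub>F h in at_right (0::real). avg S h z \<in> closure {x \<in> D. A x \<in> D}"
      using ev
    proof eventually_elim
      case (elim h)
      have "S h z \<in> D" using gen_invariant(1)[OF g z, of h] elim by linarith
      then have "z - S h z \<in> D" using gen_diff(1)[OF g z] by simp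
      then have "(1 / h) *\<^sub>R (z - S h z) \<in> D" using gen_subspace(4)[OF g] by simp
      then have "avg S h z \<in> {x \<in> D. A x \<in> D}" using avg_gen[OF g elim] by simp
      then show ?case by (rule subsetD[OF closure_subset])
    qed
    then show "z \<in> closure {x \<in> D. A x \<in> D}"
      by (rule Lim_in_closed_set[OF closed_closure _ atr_nb avg_lim[OF C]])
  qed
  have sub2: "UNIV \<subseteq> closure D"
  proof
    fix z :: 'a
    have "\<forall>\<^sub>F h in at_right (0::real). avg S h z \<in> closure D"
      using ev
    proof eventually_elim
      case (elim h)
      then show ?case using avg_gen(1)[OF g elim] closure_subset by blast
    qed
    then show "z \<in> closure D"
      by (rule Lim_in_closed_set[OF closed_closure _ atr_nb avg_lim[OF C]])
  qed
  have "closure D \<subseteq> closure {x \<in> D. A x \<in> D}"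
    by (rule closure_minimal[OF sub1 closed_closure])
  then show ?thesis using sub2 by auto
qed


lemma mvt_bound:
  fixes f :: "real \<Rightarrow> 'a::real_normed_vector"
  assumes ab: "a \<le> b" and cf: "continuous_on {a..b} f"
    and d: "\<And>x. a < x \<Longrightarrow> x < b \<Longrightarrow> (f has_vector_derivative f' x) (at x within {a..b})"
    and bd: "\<And>x. a < x \<Longrightarrow> x < b \<Longrightarrow> norm (f' x) \<le> B"
  shows "norm (f b - f a) \<le> B * (b - a)"
proof (cases "a = b")
  case True then show ?thesis by simp
next
  case False
  then have lt: "a < b" using ab by simp
  have "norm (f b - f a) \<le> B * b - B * a"
  proof (rule differentiable_bound_general[OF lt cf, of "\<lambda>x. B * x" f' "\<lambda>x. B"])
    show "continuous_on {a..b} (\<lambda>x. B * x)" by (intro continuous_intros)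
    fix x assume x: "a < x" "x < b"
    then have "x \<in> interior {a..b}" by simp
    then show "(f has_vector_derivative f' x) (at x)" using d[OF x] at_within_interior by metis
    show "((\<lambda>x. B * x) has_vector_derivative B) (at x)"
      using has_vector_derivative_def by (auto intro!: derivative_eq_intros)
    show "norm (f' x) \<le> B" using bd[OF x] .
  qed
  then show ?thesis by (simp add: algebra_simps)
qed

lemma gen_deriv_Icc:
  fixes S :: "real \<Rightarrow> 'a::banach \<Rightarrow> 'a"
  assumes g: "neg_generator D A S" and x: "x \<in> D" and t: "t \<in> {a..b}" and a: "a \<ge> 0"
  shows "((\<lambda>s. S s x) has_vector_derivative - S t (A x)) (at t within {a..b})"
  by (rule has_vector_derivative_within_subset[OF gen_deriv[OF g x]]) (use t a in auto)

lemma S_incr_bound: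
  fixes S :: "real \<Rightarrow> 'a::banach \<Rightarrow> 'a"
  assumes g: "neg_generator D A S" and x: "x \<in> D"
    and K: "\<forall>s\<in>{0..c}. \<forall>y. norm (S s y) \<le> K * norm y" and t: "0 \<le> t" "t \<le> c"
  shows "norm (S t x - x) \<le> K * norm (A x) * t"
proof -
  have C: "C0_semigroup S" using gen_C0[OF g] .
  have "norm (S t x - S 0 x) \<le> (K * norm (A x)) * (t - 0)"
  proof (rule mvt_bound[OF t(1) C0_cont_on[OF _ C]])
    fix s assume s: "0 < s" "s < t"
    show "((\<lambda>s. S s x) has_vector_derivative - S s (A x)) (at s within {0..t})"
      using gen_deriv_Icc[OF g x] s by auto
    show "norm (- S s (A x)) \<le> K * norm (A x)" using K s t by auto
  qed simp
  then show ?thesis using C0D(2)[OF C] by simp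
qed

lemma exp_ineq:
  fixes x :: real
  assumes "0 \<le> x" "x \<le> 1/2"
  shows "1 / (1 - x) \<le> exp (2 * x)"
proof -
  have "1 + 2 * x \<le> exp (2 * x)" by (rule exp_ge_add_one_self_aux) (use assms in simp)
  moreover have "1 / (1 - x) \<le> 1 + 2 * x"
  proof -
    have "0 \<le> x * (1 - 2 * x)" by (rule mult_nonneg_nonneg) (use assms in auto)
    then have "1 \<le> (1 + 2 * x) * (1 - x)" by (simp add: algebra_simps)
    then show ?thesis using assms by (simp add: field_simps)
  qed
  ultimately show ?thesis by linarith
qed

lemma ratio_pow_bound:
  fixes m w :: real
  assumes "w > 0" "m \<ge> 2 * w"
  shows "(m / (m - w)) ^ k \<le> exp (2 * w * real k / m)"
proof -
  have mp: "m > 0" using assms by simp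
  have "m / (m - w) = 1 / (1 - w / m)" using mp assms by (simp add: field_simps)
  also have "\<dots> \<le> exp (2 * (w / m))" by (rule exp_ineq) (use assms mp in \<open>auto simp: field_simps\<close>)
  finally have b: "m / (m - w) \<le> exp (2 * (w / m))" .
  have "(m / (m - w)) ^ k \<le> exp (2 * (w / m)) ^ k"
    by (rule power_mono[OF b]) (use assms mp in simp)
  also have "\<dots> = exp (2 * w * real k / m)" by (simp add: exp_of_nat_mult[symmetric] field_simps)
  finally show ?thesis .
qed

lemma funpow_scale:
  fixes R :: "'a::real_vector \<Rightarrow> 'a"
  assumes "linear R"
  shows "((\<lambda>x. c *\<^sub>R R x) ^^ k) x = (c ^ k) *\<^sub>R (R ^^ k) x"
proof (induction k arbitrary: x)
  case 0 then show ?case by (simp add: funpow.simps)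
next
  case (Suc k)
  show ?case using Suc by (simp add: linear_scale[OF assms])
qed


locale euler_ctx =
  fixes S :: "real \<Rightarrow> 'a::banach \<Rightarrow> 'a" and D A and R :: "real \<Rightarrow> 'a \<Rightarrow> 'a" and \<omega> M :: real
  assumes g: "neg_generator D A S" and wp: "\<omega> > 0" and Mp: "M \<ge> 0"
    and Rl: "\<And>m. m > \<omega> \<Longrightarrow> bounded_linear (R m)"
    and Ri: "\<And>m v. m > \<omega> \<Longrightarrow> v \<in> D \<Longrightarrow> R m (A v + m *\<^sub>R v) = v"
    and Rb: "\<And>m k x. m > \<omega> \<Longrightarrow> norm ((R m ^^ k) x) \<le> M / (m - \<omega>) ^ k * norm x"
begin

definition F :: "real \<Rightarrow> 'a \<Rightarrow> 'a" where "F m = (\<lambda>x. m *\<^sub>R R m x)"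

lemma C: "C0_semigroup S" using gen_C0[OF g] .

lemma F_bl: "m > \<omega> \<Longrightarrow> bounded_linear (F m ^^ k)"
proof (induction k)
  case 0 then show ?case by (simp add: bounded_linear_ident[unfolded id_def] id_def)
next
  case (Suc k)
  have "bounded_linear (F m)" unfolding F_def
    using Rl[OF Suc.prems] by (intro bounded_linear_scaleR_right[THEN bounded_linear_compose]) 
  then show ?case using Suc by (simp add: bounded_linear_compose funpow_Suc_right del: funpow.simps)
qed

lemma F_bound:
  assumes m: "m \<ge> 2 * \<omega>" and c: "real k \<le> m * c"
  shows "norm ((F m ^^ k) x) \<le> M * exp (2 * \<omega> * c) * norm x"
proof -
  have mw: "m > \<omega>" using m wp by simp
  have mp: "m > 0" using mw wp by simp
  have "(F m ^^ k) x = (m ^ k) *\<^sub>R (R m ^^ k) x"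
    unfolding F_def by (rule funpow_scale[OF bounded_linear.linear[OF Rl[OF mw]]])
  then have "norm ((F m ^^ k) x) = m ^ k * norm ((R m ^^ k) x)" using mp by simp
  also have "\<dots> \<le> m ^ k * (M / (m - \<omega>) ^ k * norm x)"
    by (rule mult_left_mono[OF Rb[OF mw]]) (use mp in simp)
  also have "\<dots> = M * (m / (m - \<omega>)) ^ k * norm x" by (simp add: power_divide)
  also have "\<dots> \<le> M * exp (2 * \<omega> * real k / m) * norm x"
    by (intro mult_right_mono mult_left_mono ratio_pow_bound) (use wp m Mp in auto)
  also have "\<dots> \<le> M * exp (2 * \<omega> * c) * norm x"
  proof -
    have "real k / m \<le> c" using c mp by (simp add: field_simps)
    then have "2 * \<omega> * (real k / m) \<le> 2 * \<omega> * c" using wp by (intro mult_left_mono) auto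
    then have "2 * \<omega> * real k / m \<le> 2 * \<omega> * c" by simp
    then show ?thesis by (intro mult_right_mono mult_left_mono) (use Mp in auto)
  qed
  finally show ?thesis .
qed

lemma F_D: assumes "m > \<omega>" "v \<in> D" shows "F m v = v - R m (A v)"
proof -
  interpret L: bounded_linear "R m" using Rl[OF assms(1)] .
  have "R m (A v) + m *\<^sub>R R m v = v" using Ri[OF assms] by (simp add: L.add L.scale)
  then show ?thesis unfolding F_def by (simp add: algebra_simps eq_diff_eq)
qed

lemma D_bound:
  assumes m: "m \<ge> 2 * \<omega>" "m \<ge> 1" and v: "v \<in> D" "A v \<in> D"
    and K1: "K1 \<ge> 0" "\<forall>s\<in>{0..1}. \<forall>y. norm (S s y) \<le> K1 * norm y"
  shows "norm (S (1 / m) v - F m v) \<le> (1 / m) ^ 2 * (K1 + M * exp (2 * \<omega>)) * norm (A (A v))"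
proof -
  define h where "h = 1 / m"
  define u where "u = A v"
  have mw: "m > \<omega>" using m wp by simp
  have mp: "m > 0" using m by simp
  have h: "0 < h" "h \<le> 1" using m by (auto simp: h_def)
  interpret L: bounded_linear "R m" using Rl[OF mw] .
  have Fv: "F m v = v - R m u" using F_D[OF mw v(1)] by (simp add: u_def)
  have Fu: "F m u = u - R m (A u)" using F_D[OF mw v(2)] by (simp add: u_def)
  have eq: "S h v - F m v = (S h v - v + h *\<^sub>R u) + (R m u - h *\<^sub>R u)"
    unfolding Fv by simp
  have a1: "norm (S h v - v + h *\<^sub>R u) \<le> (K1 * norm (A u) * h) * (h - 0)"
  proof -
    have "norm ((S h v + h *\<^sub>R u) - (S 0 v + 0 *\<^sub>R u)) \<le> (K1 * norm (A u) * h) * (h - 0)"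
    proof (rule mvt_bound[where f="\<lambda>t. S t v + t *\<^sub>R u" and f'="\<lambda>t. - S t u + u"])
      show "0 \<le> h" using h by simp
      show "continuous_on {0..h} (\<lambda>t. S t v + t *\<^sub>R u)"
        by (intro continuous_intros C0_cont_on[OF _ C]) simp
      fix t assume t: "0 < t" "t < h"
      have d1: "((\<lambda>t. S t v) has_vector_derivative - S t (A v)) (at t within {0..h})"
        using gen_deriv_Icc[OF g v(1)] t by simp
      have d2: "((\<lambda>t. t *\<^sub>R u) has_vector_derivative u) (at t within {0..h})"
        unfolding has_vector_derivative_def
        by (rule bounded_linear_imp_has_derivative[OF bounded_linear_scaleR_left])
      show "((\<lambda>t. S t v + t *\<^sub>R u) has_vector_derivative - S t u + u) (at t within {0..h})"
        using has_vector_derivative_add[OF d1 d2] by (simp add: u_def)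
      have "norm (S t u - u) \<le> K1 * norm (A u) * t"
        by (rule S_incr_bound[OF g v(2)[folded u_def] K1(2)]) (use t h in auto)
      also have "\<dots> \<le> K1 * norm (A u) * h"
        using t K1 by (intro mult_left_mono) auto
      finally show "norm (- S t u + u) \<le> K1 * norm (A u) * h" by (simp add: norm_minus_commute)
    qed
    then show ?thesis using C0D(2)[OF C] by (simp add: algebra_simps)
  qed
  have Ru: "R m u - h *\<^sub>R u = - (h *\<^sub>R (h *\<^sub>R F m (A u)))"
  proof -
    have "m *\<^sub>R R m u = u - R m (A u)" using Fu by (simp add: F_def)
    moreover have "R m u = h *\<^sub>R (m *\<^sub>R R m u)" using mp by (simp add: h_def)
    ultimately have "R m u = h *\<^sub>R u - h *\<^sub>R R m (A u)"
      by (simp add: scaleR_diff_right)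
    moreover have "R m (A u) = h *\<^sub>R F m (A u)" using mp by (simp add: F_def h_def)
    ultimately show ?thesis by simp
  qed
  have a2: "norm (R m u - h *\<^sub>R u) \<le> h ^ 2 * (M * exp (2 * \<omega>)) * norm (A u)"
  proof -
    have "norm (F m (A u)) \<le> M * exp (2 * \<omega> * 1) * norm (A u)"
      using F_bound[OF m(1), of 1 1 "A u"] m by simp
    then have "h * (h * norm (F m (A u))) \<le> h * (h * (M * exp (2 * \<omega>) * norm (A u)))"
      using h by (intro mult_left_mono) auto
    then show ?thesis unfolding Ru using h by (simp add: power2_eq_square mult.assoc)
  qed
  have "norm (S h v - F m v) \<le> norm (S h v - v + h *\<^sub>R u) + norm (R m u - h *\<^sub>R u)"
    unfolding eq by (rule norm_triangle_ineq)
  also have "\<dots> \<le> h ^ 2 * (K1 + M * exp (2 * \<omega>)) * norm (A u)"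
    using a1 a2 by (simp add: power2_eq_square algebra_simps)
  finally show ?thesis by (simp add: h_def u_def)
qed

lemma S_add: "a \<ge> 0 \<Longrightarrow> b \<ge> 0 \<Longrightarrow> S (a + b) x = S a (S b x)"
  using C0D(3)[OF C] by simp

lemma E_sum_bound:
  assumes m: "m \<ge> 2 * \<omega>" "m \<ge> 1" and sg: "\<sigma> \<ge> 0"
  shows "real k \<le> m * \<sigma> \<Longrightarrow> norm (S (real k / m) w - (F m ^^ k) w) \<le>
    (\<Sum>i<k. M * exp (2 * \<omega> * \<sigma>) * norm (S (1 / m) (S (real i / m) w) - F m (S (real i / m) w)))"
proof (induction k arbitrary: w)
  case 0 then show ?case using C0D(2)[OF C] by simp
next
  case (Suc k)
  have mw: "m > \<omega>" using m wp by simp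
  have mp: "m > 0" using m by simp
  let ?L = "M * exp (2 * \<omega> * \<sigma>)"
  let ?g = "\<lambda>w i. ?L * norm (S (1 / m) (S (real i / m) w) - F m (S (real i / m) w))"
  interpret Fk: bounded_linear "F m ^^ k" using F_bl[OF mw] .
  have kk: "real k \<le> m * \<sigma>" using Suc.prems by simp
  have e1: "S (real (Suc k) / m) w = S (real k / m) (S (1 / m) w)"
  proof -
    have "real (Suc k) / m = real k / m + 1 / m" by (simp add: add_divide_distrib)
    then show ?thesis using S_add[of "real k / m" "1 / m" w] mp by simp
  qed
  have e2: "(F m ^^ Suc k) w = (F m ^^ k) (F m w)" by (simp add: funpow_Suc_right del: funpow.simps)
  have eq: "S (real (Suc k) / m) w - (F m ^^ Suc k) w =
      (S (real k / m) (S (1 / m) w) - (F m ^^ k) (S (1 / m) w)) + (F m ^^ k) (S (1 / m) w - F m w)"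
    unfolding e1 e2 by (simp add: Fk.diff)
  have "norm (S (real (Suc k) / m) w - (F m ^^ Suc k) w) \<le>
      norm (S (real k / m) (S (1 / m) w) - (F m ^^ k) (S (1 / m) w)) + norm ((F m ^^ k) (S (1 / m) w - F m w))"
    unfolding eq by (rule norm_triangle_ineq)
  also have "\<dots> \<le> (\<Sum>i<k. ?g (S (1 / m) w) i) + ?L * norm (S (1 / m) w - F m w)"
    by (intro add_mono Suc.IH kk F_bound m)
  also have "(\<Sum>i<k. ?g (S (1 / m) w) i) = (\<Sum>i<k. ?g w (Suc i))"
  proof (rule sum.cong[OF refl])
    fix i
    have "real (Suc i) / m = real i / m + 1 / m" by (simp add: add_divide_distrib)
    then have "S (real (Suc i) / m) w = S (real i / m) (S (1 / m) w)"
      using S_add[of "real i / m" "1 / m" w] mp by simp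
    then show "?g (S (1 / m) w) i = ?g w (Suc i)" by simp
  qed
  also have "?L * norm (S (1 / m) w - F m w) = ?g w 0" using C0D(2)[OF C] by simp
  also have "(\<Sum>i<k. ?g w (Suc i)) + ?g w 0 = (\<Sum>i<Suc k. ?g w i)"
    by (simp only: sum.lessThan_Suc_shift add.commute)
  finally show ?case .
qed

lemma E_bound:
  assumes m: "m \<ge> 2 * \<omega>" "m \<ge> 1" and sg: "\<sigma> \<ge> 0" and k: "real k \<le> m * \<sigma>"
    and w: "w \<in> D" "A w \<in> D"
    and K1: "K1 \<ge> 0" "\<forall>s\<in>{0..1}. \<forall>y. norm (S s y) \<le> K1 * norm y"
    and Ks: "Ks \<ge> 0" "\<forall>s\<in>{0..\<sigma>}. \<forall>y. norm (S s y) \<le> Ks * norm y"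
  shows "norm (S (real k / m) w - (F m ^^ k) w) \<le>
    real k * (M * exp (2 * \<omega> * \<sigma>) * ((1 / m) ^ 2 * (K1 + M * exp (2 * \<omega>)) * (Ks * norm (A (A w)))))"
proof -
  have mp: "m > 0" using m by simp
  let ?L = "M * exp (2 * \<omega> * \<sigma>)"
  let ?B = "(1 / m) ^ 2 * (K1 + M * exp (2 * \<omega>)) * (Ks * norm (A (A w)))"
  have "(\<Sum>i<k. ?L * norm (S (1 / m) (S (real i / m) w) - F m (S (real i / m) w))) \<le> real (card {..<k}) * (?L * ?B)"
  proof (rule sum_bounded_above)
    fix i assume i: "i \<in> {..<k}"
    have t0: "real i / m \<ge> 0" using mp by simp
    have ts: "real i / m \<le> \<sigma>"
    proof -
      have "real i \<le> m * \<sigma>" using i k by simp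
      then show ?thesis using mp by (simp add: field_simps)
    qed
    have i1: "S (real i / m) w \<in> D" "A (S (real i / m) w) = S (real i / m) (A w)"
      using gen_invariant[OF g w(1) t0] by auto
    have i2: "S (real i / m) (A w) \<in> D" "A (S (real i / m) (A w)) = S (real i / m) (A (A w))"
      using gen_invariant[OF g w(2) t0] by auto
    have "norm (S (1 / m) (S (real i / m) w) - F m (S (real i / m) w))
        \<le> (1 / m) ^ 2 * (K1 + M * exp (2 * \<omega>)) * norm (A (A (S (real i / m) w)))"
      by (rule D_bound[OF m i1(1) _ K1]) (use i1 i2 in simp)
    also have "norm (A (A (S (real i / m) w))) \<le> Ks * norm (A (A w))"
      using i1 i2 Ks t0 ts by auto
    then have "(1 / m) ^ 2 * (K1 + M * exp (2 * \<omega>)) * norm (A (A (S (real i / m) w))) \<le> ?B"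
      using K1 Mp by (intro mult_left_mono) auto
    finally have "norm (S (1 / m) (S (real i / m) w) - F m (S (real i / m) w)) \<le> ?B" .
    then show "?L * norm (S (1 / m) (S (real i / m) w) - F m (S (real i / m) w)) \<le> ?L * ?B"
      using Mp by (intro mult_left_mono) auto
  qed
  then show ?thesis using E_sum_bound[OF m sg k, of w] by simp
qed

lemma euler_D2:
  assumes w: "w \<in> D" "A w \<in> D" and sg: "\<sigma> \<ge> 0"
  shows "((\<lambda>n::nat. (F (real n) ^^ nat \<lfloor>real n * \<sigma>\<rfloor>) w) \<longlongrightarrow> S \<sigma> w) sequentially"
proof -
  obtain K1 where K1: "K1 \<ge> 0" "\<forall>s\<in>{0..1}. \<forall>y. norm (S s y) \<le> K1 * norm y"
    using C0_local_bound[OF C] by blast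
  obtain Ks where Ks: "Ks \<ge> 0" "\<forall>s\<in>{0..\<sigma>}. \<forall>y. norm (S s y) \<le> Ks * norm y"
    using C0_local_bound[OF C] by blast
  define k where "k n = nat \<lfloor>real n * \<sigma>\<rfloor>" for n :: nat
  have k1: "real (k n) \<le> real n * \<sigma>" for n
    using sg by (simp add: k_def)
  have k2: "real n * \<sigma> - 1 < real (k n)" for n
    using sg by (simp add: k_def)
  define Cst where "Cst = M * exp (2 * \<omega> * \<sigma>) * ((K1 + M * exp (2 * \<omega>)) * (Ks * norm (A (A w))))"
  have Cst: "Cst \<ge> 0" using Mp K1 Ks by (simp add: Cst_def)
  obtain N0 :: nat where N0: "real N0 \<ge> max (2 * \<omega>) 1" using real_arch_simple by blast
  have evN: "\<forall>\<^sub>F n in sequentially. real n \<ge> 2 * \<omega> \<and> real n \<ge> 1"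
    using eventually_ge_at_top[of N0] by eventually_elim (use N0 in auto)
  have E0: "((\<lambda>n. S (real (k n) / real n) w - (F (real n) ^^ k n) w) \<longlongrightarrow> 0) sequentially"
  proof (rule Lim_null_comparison)
    show "\<forall>\<^sub>F n in sequentially. norm (S (real (k n) / real n) w - (F (real n) ^^ k n) w) \<le> (Cst * \<sigma>) * (1 / real n)"
      using evN
    proof eventually_elim
      case (elim n)
      have np: "real n > 0" using elim by simp
      have "norm (S (real (k n) / real n) w - (F (real n) ^^ k n) w) \<le>
          real (k n) * (M * exp (2 * \<omega> * \<sigma>) * ((1 / real n) ^ 2 * (K1 + M * exp (2 * \<omega>)) * (Ks * norm (A (A w)))))"
        by (rule E_bound[OF _ _ sg _ w K1 Ks]) (use elim k1 in auto)
      also have "\<dots> = (real (k n) * (1 / real n)) * Cst * (1 / real n)"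
        by (simp add: Cst_def power2_eq_square algebra_simps)
      also have "\<dots> \<le> \<sigma> * Cst * (1 / real n)"
      proof -
        have "real (k n) * (1 / real n) \<le> \<sigma>" using k1[of n] np by (simp add: field_simps)
        then show ?thesis using Cst np by (intro mult_right_mono) auto
      qed
      finally show ?case by (simp add: algebra_simps)
    qed
    show "((\<lambda>n. (Cst * \<sigma>) * (1 / real n)) \<longlongrightarrow> 0) sequentially"
      using tendsto_mult_right_zero[OF lim_1_over_n] by simp
  qed
  have kn: "((\<lambda>n. real (k n) / real n) \<longlongrightarrow> \<sigma>) sequentially"
  proof -
    have "((\<lambda>n. real (k n) / real n - \<sigma>) \<longlongrightarrow> 0) sequentially"
    proof (rule Lim_null_comparison)
      show "\<forall>\<^sub>F n in sequentially. norm (real (k n) / real n - \<sigma>) \<le> 1 / real n"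
        using evN
      proof eventually_elim
        case (elim n)
        have np: "real n > 0" using elim by simp
        have a: "real (k n) / real n \<le> \<sigma>" using k1[of n] np by (simp add: field_simps)
        have "(real n * \<sigma> - 1) / real n < real (k n) / real n"
          using k2[of n] np by (intro divide_strict_right_mono) auto
        moreover have "(real n * \<sigma> - 1) / real n = \<sigma> - 1 / real n" using np by (simp add: diff_divide_distrib)
        ultimately have b: "\<sigma> - 1 / real n < real (k n) / real n" by simp
        show ?case using a b by simp
      qed
      show "((\<lambda>n. 1 / real n) \<longlongrightarrow> 0) sequentially" by (rule lim_1_over_n)
    qed
    then show ?thesis by (simp add: LIM_zero_iff)
  qed
  have S1: "((\<lambda>n. S (real (k n) / real n) w) \<longlongrightarrow> S \<sigma> w) sequentially"
  proof (rule continuous_within_tendsto_compose[where S="{0..}" and f="\<lambda>t. S t w"])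
    show "continuous (at \<sigma> within {0..}) (\<lambda>t. S t w)"
      using C0D(4)[OF C, of w] sg continuous_on_eq_continuous_within by blast
    show "\<forall>\<^sub>F n in sequentially. real (k n) / real n \<in> {0..}" by simp
    show "((\<lambda>n. real (k n) / real n) \<longlongrightarrow> \<sigma>) sequentially" by (rule kn)
  qed
  have "((\<lambda>n. S (real (k n) / real n) w - (S (real (k n) / real n) w - (F (real n) ^^ k n) w)) \<longlongrightarrow> S \<sigma> w - 0) sequentially"
    by (intro tendsto_diff S1 E0)
  then show ?thesis by (simp add: k_def)
qed

lemma euler:
  assumes sg: "\<sigma> \<ge> 0"
  shows "((\<lambda>n::nat. (F (real n) ^^ nat \<lfloor>real n * \<sigma>\<rfloor>) w) \<longlongrightarrow> S \<sigma> w) sequentially"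
proof -
  obtain Ks where Ks: "Ks \<ge> 0" "\<forall>s\<in>{0..\<sigma>}. \<forall>y. norm (S s y) \<le> Ks * norm y"
    using C0_local_bound[OF C] by blast
  define L where "L = M * exp (2 * \<omega> * \<sigma>)"
  have L: "L \<ge> 0" using Mp by (simp add: L_def)
  define k where "k n = nat \<lfloor>real n * \<sigma>\<rfloor>" for n :: nat
  have k1: "real (k n) \<le> real n * \<sigma>" for n
    using sg by (simp add: k_def)
  obtain N0 :: nat where N0: "real N0 \<ge> max (2 * \<omega>) 1" using real_arch_simple by blast
  have evN: "\<forall>\<^sub>F n in sequentially. real n \<ge> 2 * \<omega>"
    using eventually_ge_at_top[of N0] by eventually_elim (use N0 in auto)
  show ?thesis
    unfolding tendsto_iff k_def[symmetric]
  proof (intro allI impI)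
    fix \<epsilon> :: real assume e: "\<epsilon> > 0"
    define \<delta> where "\<delta> = \<epsilon> / (3 * (L + Ks + 1))"
    have dp: "\<delta> > 0" using e L Ks by (simp add: \<delta>_def)
    have dle: "(L + Ks) * \<delta> < \<epsilon> / 3"
    proof -
      have "(L + Ks) * \<delta> < (L + Ks + 1) * \<delta>" using dp by simp
      also have "\<dots> = \<epsilon> / 3" using L Ks by (simp add: \<delta>_def field_simps)
      finally show ?thesis .
    qed
    have "w \<in> closure {x \<in> D. A x \<in> D}" using gen_dense2[OF g] by simp
    then obtain w' where w': "w' \<in> D" "A w' \<in> D" "dist w' w < \<delta>"
      using dp unfolding closure_approachable by blast
    have conv: "((\<lambda>n. (F (real n) ^^ k n) w') \<longlongrightarrow> S \<sigma> w') sequentially"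
      using euler_D2[OF w'(1,2) sg] by (simp add: k_def)
    then have ev: "\<forall>\<^sub>F n in sequentially. dist ((F (real n) ^^ k n) w') (S \<sigma> w') < \<epsilon> / 3"
    proof -
      have "\<epsilon> / 3 > 0" using e by simp
      then show ?thesis using conv unfolding tendsto_iff by blast
    qed
    show "\<forall>\<^sub>F n in sequentially. dist ((F (real n) ^^ k n) w) (S \<sigma> w) < \<epsilon>"
      using ev evN
    proof eventually_elim
      case (elim n)
      have mw: "real n > \<omega>" using elim wp by simp
      interpret Fk: bounded_linear "F (real n) ^^ k n" using F_bl[OF mw] .
      interpret Sl: bounded_linear "S \<sigma>" using C0D(1)[OF C sg] .
      have nd: "norm (w - w') < \<delta>" using w'(3) by (simp add: dist_norm norm_minus_commute)
      have b1: "norm ((F (real n) ^^ k n) (w - w')) \<le> L * norm (w - w')"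
        unfolding L_def by (rule F_bound) (use elim k1 in auto)
      have "norm (S \<sigma> (w' - w)) \<le> Ks * norm (w' - w)"
        using Ks sg by auto
      then have b2: "norm (S \<sigma> (w' - w)) \<le> Ks * norm (w - w')"
        by (simp add: norm_minus_commute)
      have eqw: "(F (real n) ^^ k n) w - S \<sigma> w =
          (F (real n) ^^ k n) (w - w') + ((F (real n) ^^ k n) w' - S \<sigma> w') + S \<sigma> (w' - w)"
        by (simp add: Fk.diff Sl.diff)
      have "norm ((F (real n) ^^ k n) w - S \<sigma> w) \<le>
          norm ((F (real n) ^^ k n) (w - w')) + norm ((F (real n) ^^ k n) w' - S \<sigma> w') + norm (S \<sigma> (w' - w))"
        unfolding eqw by (rule order_trans[OF norm_triangle_ineq add_right_mono[OF norm_triangle_ineq]])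
      also have "\<dots> \<le> L * norm (w - w') + \<epsilon> / 3 + Ks * norm (w - w')"
        using b1 b2 elim(1) by (simp add: dist_norm)
      also have "\<dots> = (L + Ks) * norm (w - w') + \<epsilon> / 3" by (simp add: algebra_simps)
      also have "\<dots> \<le> (L + Ks) * \<delta> + \<epsilon> / 3"
        using nd L Ks by (intro add_right_mono mult_left_mono) auto
      also have "\<dots> < \<epsilon>" using dle e by linarith
      finally show ?case by (simp add: dist_norm)
    qed
  qed
qed

end


lemma fold_replicate_comp:
  "fold (\<lambda>t f. R t \<circ> f) (replicate k \<tau>) f0 = (R \<tau> ^^ k) \<circ> f0"
  by (induction k arbitrary: f0) (auto simp: funpow_Suc_right comp_assoc simp del: funpow.simps)

locale kato_ctx =
  fixes SG :: "real \<Rightarrow> real \<Rightarrow> 'a::banach \<Rightarrow> 'a" and DG AG and RR :: "real \<Rightarrow> real \<Rightarrow> 'a \<Rightarrow> 'a"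
    and I :: "real set" and \<omega> M :: real
  assumes gen: "\<And>\<tau>. \<tau> \<in> I \<Longrightarrow> neg_generator (DG \<tau>) (AG \<tau>) (SG \<tau>)"
    and wp: "\<omega> > 0" and Mp: "M \<ge> 0"
    and Rl: "\<And>\<tau> m. \<tau> \<in> I \<Longrightarrow> m > \<omega> \<Longrightarrow> bounded_linear (RR \<tau> m)"
    and Ri: "\<And>\<tau> m v. \<tau> \<in> I \<Longrightarrow> m > \<omega> \<Longrightarrow> v \<in> DG \<tau> \<Longrightarrow> RR \<tau> m (AG \<tau> v + m *\<^sub>R v) = v"
    and Rp: "\<And>m ts x. m > \<omega> \<Longrightarrow> sorted ts \<Longrightarrow> set ts \<subseteq> I \<Longrightarrow>
              norm (fold (\<lambda>t f. RR t m \<circ> f) ts id x) \<le> M / (m - \<omega>) ^ length ts * norm x"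
begin

lemma ectx:
  assumes t: "\<tau> \<in> I"
  shows "euler_ctx (SG \<tau>) (DG \<tau>) (AG \<tau>) (RR \<tau>) \<omega> M"
proof -
  have Rb: "norm ((RR \<tau> m ^^ k) x) \<le> M / (m - \<omega>) ^ k * norm x" if m: "m > \<omega>" for m k x
  proof -
    have "norm (fold (\<lambda>t f. RR t m \<circ> f) (replicate k \<tau>) id x) \<le> M / (m - \<omega>) ^ length (replicate k \<tau>) * norm x"
      by (rule Rp[OF m]) (use t in auto)
    then show ?thesis unfolding fold_replicate_comp by simp
  qed
  show ?thesis unfolding euler_ctx_def using gen[OF t] wp Mp Rl[OF t] Ri[OF t] Rb by blast
qed

definition P :: "(real \<times> real) list \<Rightarrow> 'a \<Rightarrow> 'a" where
  "P ps = fold (\<lambda>(\<tau>, d) f. SG \<tau> d \<circ> f) ps id"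

definition Fm :: "real \<Rightarrow> real \<Rightarrow> 'a \<Rightarrow> 'a" where
  "Fm \<tau> m = (\<lambda>x. m *\<^sub>R RR \<tau> m x)"

definition kk :: "nat \<Rightarrow> real \<Rightarrow> nat" where "kk n d = nat \<lfloor>real n * d\<rfloor>"

definition Q :: "nat \<Rightarrow> (real \<times> real) list \<Rightarrow> 'a \<Rightarrow> 'a" where
  "Q n ps = fold (\<lambda>(\<tau>, d) f. (Fm \<tau> (real n) ^^ kk n d) \<circ> f) ps id"

definition tsl :: "nat \<Rightarrow> (real \<times> real) list \<Rightarrow> real list" where
  "tsl n ps = concat (map (\<lambda>(\<tau>, d). replicate (kk n d) \<tau>) ps)"

lemma P_snoc: "P (ps @ [(\<tau>, d)]) x = SG \<tau> d (P ps x)"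
  by (simp add: P_def)

lemma Q_snoc: "Q n (ps @ [(\<tau>, d)]) x = (Fm \<tau> (real n) ^^ kk n d) (Q n ps x)"
  by (simp add: Q_def)

lemma Fm_eq: "\<tau> \<in> I \<Longrightarrow> Fm \<tau> = euler_ctx.F (RR \<tau>)"
  using euler_ctx.F_def[OF ectx] by (simp add: Fm_def fun_eq_iff)

lemma Q_conv:
  assumes "set (map fst ps) \<subseteq> I" "\<forall>p\<in>set ps. snd p \<ge> 0"
  shows "((\<lambda>n. Q n ps x) \<longlongrightarrow> P ps x) sequentially"
  using assms
proof (induction ps rule: rev_induct)
  case Nil then show ?case by (simp add: P_def Q_def)
next
  case (snoc p ps)
  obtain \<tau> d where p: "p = (\<tau>, d)" by (cases p) auto
  have t: "\<tau> \<in> I" and d: "d \<ge> 0" using snoc.prems p by auto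
  have IH: "((\<lambda>n. Q n ps x) \<longlongrightarrow> P ps x) sequentially" using snoc by auto
  interpret E: euler_ctx "SG \<tau>" "DG \<tau>" "AG \<tau>" "RR \<tau>" \<omega> M using ectx[OF t] .
  define L where "L = M * exp (2 * \<omega> * d)"
  obtain N0 :: nat where N0: "real N0 \<ge> 2 * \<omega>" using real_arch_simple by blast
  have evN: "\<forall>\<^sub>F n in sequentially. real n \<ge> 2 * \<omega>"
    using eventually_ge_at_top[of N0] by eventually_elim (use N0 in auto)
  have a: "((\<lambda>n. (Fm \<tau> (real n) ^^ kk n d) (Q n ps x - P ps x)) \<longlongrightarrow> 0) sequentially"
  proof (rule Lim_null_comparison)
    show "\<forall>\<^sub>F n in sequentially. norm ((Fm \<tau> (real n) ^^ kk n d) (Q n ps x - P ps x)) \<le> L * norm (Q n ps x - P ps x)"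
      using evN
    proof eventually_elim
      case (elim n)
      show ?case unfolding Fm_eq[OF t] L_def
        by (rule E.F_bound[OF elim]) (use d in \<open>simp add: kk_def\<close>)
    qed
    have z: "((\<lambda>n. Q n ps x - P ps x) \<longlongrightarrow> 0) sequentially" using IH by (simp add: LIM_zero_iff)
    show "((\<lambda>n. L * norm (Q n ps x - P ps x)) \<longlongrightarrow> 0) sequentially"
      using tendsto_mult_right_zero[OF tendsto_norm_zero[OF z]] .
  qed
  have b: "((\<lambda>n. (Fm \<tau> (real n) ^^ kk n d) (P ps x)) \<longlongrightarrow> SG \<tau> d (P ps x)) sequentially"
    unfolding Fm_eq[OF t] kk_def using E.euler[OF d] .
  have "((\<lambda>n. (Fm \<tau> (real n) ^^ kk n d) (Q n ps x - P ps x) + (Fm \<tau> (real n) ^^ kk n d) (P ps x))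
      \<longlongrightarrow> 0 + SG \<tau> d (P ps x)) sequentially"
    by (intro tendsto_add a b)
  moreover have "\<forall>\<^sub>F n in sequentially. (Fm \<tau> (real n) ^^ kk n d) (Q n ps x - P ps x) + (Fm \<tau> (real n) ^^ kk n d) (P ps x)
      = Q n (ps @ [p]) x"
    using evN
  proof eventually_elim
    case (elim n)
    have "real n > \<omega>" using elim wp by simp
    then interpret L: bounded_linear "Fm \<tau> (real n) ^^ kk n d" unfolding Fm_eq[OF t] by (rule E.F_bl)
    show ?case unfolding p Q_snoc by (simp add: L.diff)
  qed
  ultimately show ?case unfolding p P_snoc by (simp add: tendsto_cong)
qed

lemma tsl_snoc: "tsl n (ps @ [(\<tau>, d)]) = tsl n ps @ replicate (kk n d) \<tau>"
  by (simp add: tsl_def)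

lemma tsl_set: "set (tsl n ps) \<subseteq> set (map fst ps)"
  by (induction ps rule: rev_induct) (auto simp: tsl_snoc tsl_def split: prod.splits)

lemma tsl_sorted: "sorted (map fst ps) \<Longrightarrow> sorted (tsl n ps)"
proof (induction ps rule: rev_induct)
  case Nil then show ?case by (simp add: tsl_def)
next
  case (snoc p ps)
  obtain \<tau> d where p: "p = (\<tau>, d)" by (cases p) auto
  have s: "sorted (map fst ps)" "\<forall>t\<in>set (map fst ps). t \<le> \<tau>" using snoc.prems p by (auto simp: sorted_append)
  have "sorted (tsl n ps)" using snoc.IH s by simp
  moreover have "\<forall>t\<in>set (tsl n ps). t \<le> \<tau>" using s(2) tsl_set by blast
  ultimately show ?case unfolding p tsl_snoc by (auto simp: sorted_append)
qed

lemma tsl_length: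
  assumes "\<forall>p\<in>set ps. snd p \<ge> 0"
  shows "real (length (tsl n ps)) \<le> real n * sum_list (map snd ps)"
  using assms
proof (induction ps rule: rev_induct)
  case Nil then show ?case by (simp add: tsl_def)
next
  case (snoc p ps)
  obtain \<tau> d where p: "p = (\<tau>, d)" by (cases p) auto
  have d: "d \<ge> 0" using snoc.prems p by auto
  have "real (kk n d) \<le> real n * d" using d by (simp add: kk_def)
  then show ?case using snoc p by (simp add: tsl_snoc algebra_simps)
qed

lemma Q_eq:
  assumes n: "real n > \<omega>" and I: "set (map fst ps) \<subseteq> I"
  shows "Q n ps x = (real n ^ length (tsl n ps)) *\<^sub>R fold (\<lambda>t f. RR t (real n) \<circ> f) (tsl n ps) id x"
  using I
proof (induction ps arbitrary: x rule: rev_induct)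
  case Nil then show ?case by (simp add: Q_def tsl_def)
next
  case (snoc p ps)
  obtain \<tau> d where p: "p = (\<tau>, d)" by (cases p) auto
  have t: "\<tau> \<in> I" using snoc.prems p by auto
  interpret E: euler_ctx "SG \<tau>" "DG \<tau>" "AG \<tau>" "RR \<tau>" \<omega> M using ectx[OF t] .
  interpret L: bounded_linear "Fm \<tau> (real n) ^^ kk n d" unfolding Fm_eq[OF t] by (rule E.F_bl[OF n])
  have lin: "linear (RR \<tau> (real n))" using Rl[OF t n] bounded_linear.linear by blast
  let ?G = "fold (\<lambda>t f. RR t (real n) \<circ> f) (tsl n ps) id"
  have "Q n (ps @ [p]) x = (Fm \<tau> (real n) ^^ kk n d) ((real n ^ length (tsl n ps)) *\<^sub>R ?G x)"
  proof -
    have Ips: "set (map fst ps) \<subseteq> I" using snoc.prems by auto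
    show ?thesis unfolding p Q_snoc snoc.IH[OF Ips] ..
  qed
  also have "\<dots> = (real n ^ length (tsl n ps)) *\<^sub>R (Fm \<tau> (real n) ^^ kk n d) (?G x)"
    by (simp add: L.scale)
  also have "(Fm \<tau> (real n) ^^ kk n d) (?G x) = (real n ^ kk n d) *\<^sub>R (RR \<tau> (real n) ^^ kk n d) (?G x)"
    unfolding Fm_def by (rule funpow_scale[OF lin])
  finally have A: "Q n (ps @ [p]) x = (real n ^ length (tsl n ps)) *\<^sub>R ((real n ^ kk n d) *\<^sub>R (RR \<tau> (real n) ^^ kk n d) (?G x))" .
  have fr: "fold (\<lambda>t f. RR t (real n) \<circ> f) (replicate (kk n d) \<tau>) ?G = (RR \<tau> (real n) ^^ kk n d) \<circ> ?G"
    by (rule fold_replicate_comp)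
  have B: "fold (\<lambda>t f. RR t (real n) \<circ> f) (tsl n (ps @ [p])) id x = (RR \<tau> (real n) ^^ kk n d) (?G x)"
    by (simp only: p tsl_snoc fold_append o_apply fr)
  have len: "length (tsl n (ps @ [p])) = length (tsl n ps) + kk n d" by (simp add: p tsl_snoc)
  show ?case by (simp only: A B len power_add scaleR_scaleR)
qed

lemma Q_bound:
  assumes n: "real n \<ge> 2 * \<omega>" and I: "set (map fst ps) \<subseteq> I" and srt: "sorted (map fst ps)"
    and d: "\<forall>p\<in>set ps. snd p \<ge> 0"
  shows "norm (Q n ps x) \<le> M * exp (2 * \<omega> * sum_list (map snd ps)) * norm x"
proof -
  have nw: "real n > \<omega>" using n wp by simp
  have np: "real n > 0" using nw wp by simp
  let ?K = "length (tsl n ps)"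
  have "norm (Q n ps x) = real n ^ ?K * norm (fold (\<lambda>t f. RR t (real n) \<circ> f) (tsl n ps) id x)"
    unfolding Q_eq[OF nw I] using np by simp
  also have "\<dots> \<le> real n ^ ?K * (M / (real n - \<omega>) ^ ?K * norm x)"
  proof -
    have "set (tsl n ps) \<subseteq> I" using tsl_set[of n ps] I by blast
    then show ?thesis by (intro mult_left_mono Rp[OF nw tsl_sorted[OF srt]]) (use np in auto)
  qed
  also have "\<dots> = M * (real n / (real n - \<omega>)) ^ ?K * norm x" by (simp add: power_divide)
  also have "\<dots> \<le> M * exp (2 * \<omega> * real ?K / real n) * norm x"
    by (intro mult_right_mono mult_left_mono ratio_pow_bound) (use wp n Mp in auto)
  also have "\<dots> \<le> M * exp (2 * \<omega> * sum_list (map snd ps)) * norm x"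
  proof -
    have "real ?K / real n \<le> sum_list (map snd ps)" using tsl_length[OF d, of n] np by (simp add: field_simps)
    then have "2 * \<omega> * (real ?K / real n) \<le> 2 * \<omega> * sum_list (map snd ps)" using wp by (intro mult_left_mono) auto
    then show ?thesis by (intro mult_right_mono mult_left_mono) (use Mp in auto)
  qed
  finally show ?thesis .
qed

lemma P_bound:
  assumes I: "set (map fst ps) \<subseteq> I" and srt: "sorted (map fst ps)"
    and d: "\<forall>p\<in>set ps. snd p \<ge> 0"
  shows "norm (P ps x) \<le> M * exp (2 * \<omega> * sum_list (map snd ps)) * norm x"
proof (rule tendsto_upperbound[OF tendsto_norm[OF Q_conv[OF I d]]])
  obtain N0 :: nat where N0: "real N0 \<ge> 2 * \<omega>" using real_arch_simple by blast
  show "\<forall>\<^sub>F n in sequentially. norm (Q n ps x) \<le> M * exp (2 * \<omega> * sum_list (map snd ps)) * norm x"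
    using eventually_ge_at_top[of N0]
  proof eventually_elim
    case (elim n)
    then have "real n \<ge> 2 * \<omega>" using N0 by (meson of_nat_le_iff order_trans)
    then show ?case by (rule Q_bound[OF _ I srt d])
  qed
qed simp

end


lemma prod_deriv:
  fixes Uf :: "real \<Rightarrow> 'a::real_normed_vector \<Rightarrow> 'b::real_normed_vector" and w :: "real \<Rightarrow> 'a"
  assumes lin: "\<And>s'. s' \<in> S' \<Longrightarrow> bounded_linear (Uf s')"
    and Ub: "\<And>s' x. s' \<in> S' \<Longrightarrow> norm (Uf s' x) \<le> K * norm x"
    and Uc: "((\<lambda>s'. Uf s' w') \<longlongrightarrow> Uf s w') (at s within S')"
    and Ud: "((\<lambda>s'. Uf s' (w s)) has_vector_derivative d) (at s within S')"
    and wd: "(w has_vector_derivative w') (at s within S')"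
    and sS: "s \<in> S'"
  shows "((\<lambda>s'. Uf s' (w s')) has_vector_derivative d + Uf s w') (at s within S')"
proof -
  let ?qw = "\<lambda>s'. (1 / (s' - s)) *\<^sub>R (w s' - w s)"
  let ?qU = "\<lambda>s'. (1 / (s' - s)) *\<^sub>R (Uf s' (w s) - Uf s (w s))"
  have ev: "\<forall>\<^sub>F s' in at s within S'. s' \<in> S'" by (simp add: eventually_at_filter)
  have qw: "(?qw \<longlongrightarrow> w') (at s within S')" using wd unfolding hvd_quot_iff .
  have qU: "(?qU \<longlongrightarrow> d) (at s within S')" using Ud unfolding hvd_quot_iff .
  have a: "((\<lambda>s'. Uf s' (?qw s') - Uf s w') \<longlongrightarrow> 0) (at s within S')"
  proof -
    have E: "\<forall>\<^sub>F s' in at s within S'. Uf s' (?qw s') - Uf s w' = Uf s' (?qw s' - w') + (Uf s' w' - Uf s w')"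
      using ev
    proof eventually_elim
      case (elim s')
      interpret L: bounded_linear "Uf s'" using lin[OF elim] .
      show ?case by (simp add: L.diff)
    qed
    have R: "((\<lambda>s'. Uf s' (?qw s' - w') + (Uf s' w' - Uf s w')) \<longlongrightarrow> 0) (at s within S')"
    proof -
      have z1: "((\<lambda>s'. Uf s' (?qw s' - w')) \<longlongrightarrow> 0) (at s within S')"
      proof (rule Lim_null_comparison)
        show "\<forall>\<^sub>F s' in at s within S'. norm (Uf s' (?qw s' - w')) \<le> K * norm (?qw s' - w')"
          using ev by eventually_elim (rule Ub)
        have "((\<lambda>s'. ?qw s' - w') \<longlongrightarrow> 0) (at s within S')" using qw by (simp add: LIM_zero_iff)
        from tendsto_mult_right_zero[OF tendsto_norm_zero[OF this]]
        show "((\<lambda>s'. K * norm (?qw s' - w')) \<longlongrightarrow> 0) (at s within S')" .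
      qed
      have z2: "((\<lambda>s'. Uf s' w' - Uf s w') \<longlongrightarrow> 0) (at s within S')" using Uc by (simp add: LIM_zero_iff)
      show ?thesis using tendsto_add[OF z1 z2] by simp
    qed
    show ?thesis by (rule iffD2[OF tendsto_cong[OF E] R])
  qed
  have b: "((\<lambda>s'. ?qU s' + Uf s' (?qw s')) \<longlongrightarrow> d + Uf s w') (at s within S')"
    by (rule tendsto_add[OF qU LIM_zero_cancel[OF a]])
  have E2: "\<forall>\<^sub>F s' in at s within S'. (1 / (s' - s)) *\<^sub>R (Uf s' (w s') - Uf s (w s)) = ?qU s' + Uf s' (?qw s')"
    using ev
  proof eventually_elim
    case (elim s')
    interpret L: bounded_linear "Uf s'" using lin[OF elim] .
    show ?case by (simp add: L.diff L.scale scaleR_diff_right)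
  qed
  show ?thesis unfolding hvd_quot_iff by (rule iffD2[OF tendsto_cong[OF E2] b])
qed

definition gdom :: "(real \<Rightarrow> 'a::real_normed_vector \<Rightarrow> 'a) \<Rightarrow> 'a set" where
  "gdom S = {x. \<exists>l. (quot S x \<longlongrightarrow> l) (at_right 0)}"

definition gop :: "(real \<Rightarrow> 'a::real_normed_vector \<Rightarrow> 'a) \<Rightarrow> 'a \<Rightarrow> 'a" where
  "gop S x = - Lim (at_right 0) (quot S x)"

lemma gen_of_C0:
  assumes "C0_semigroup S"
  shows "neg_generator (gdom S) (gop S) S"
  unfolding neg_generator_def
proof (intro conjI ballI)
  show "C0_semigroup S" by fact
  show "gdom S = {x. \<exists>l. ((\<lambda>h. (1 / h) *\<^sub>R (S h x - x)) \<longlongrightarrow> l) (at_right 0)}"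
    by (simp add: gdom_def quot_def[abs_def])
  fix x assume "x \<in> gdom S"
  then obtain l where l: "(quot S x \<longlongrightarrow> l) (at_right 0)" by (auto simp: gdom_def)
  then have "Lim (at_right 0) (quot S x) = l" by (intro tendsto_Lim) simp_all
  then show "((\<lambda>h. (1 / h) *\<^sub>R (S h x - x)) \<longlongrightarrow> - gop S x) (at_right 0)"
    using l by (simp add: gop_def quot_def[abs_def])
qed

lemma fold_bl:
  assumes "\<forall>t\<in>set ts. bounded_linear (R t)" "bounded_linear f0"
  shows "bounded_linear (fold (\<lambda>t f. R t \<circ> f) ts f0)"
  using assms
proof (induction ts arbitrary: f0)
  case Nil then show ?case by simp
next
  case (Cons t ts)
  have "bounded_linear (R t \<circ> f0)" using Cons.prems by (auto intro: bounded_linear_compose simp: o_def)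
  moreover have "\<forall>t\<in>set ts. bounded_linear (R t)" using Cons.prems by simp
  ultimately have "bounded_linear (fold (\<lambda>t f. R t \<circ> f) ts (R t \<circ> f0))" using Cons.IH by blast
  moreover have "fold (\<lambda>t f. R t \<circ> f) (t # ts) f0 = fold (\<lambda>t f. R t \<circ> f) ts (R t \<circ> f0)" by simp
  ultimately show ?case by (simp only:)
qed

lemma fold_lift:
  assumes "\<forall>k\<in>set xs. \<forall>y. Sx k (J y) = J (Sy k y)" "\<forall>y. f0 (J y) = J (g0 y)"
  shows "fold (\<lambda>k f. Sx k \<circ> f) xs f0 (J y) = J (fold (\<lambda>k f. Sy k \<circ> f) xs g0 y)"
  using assms
proof (induction xs arbitrary: f0 g0)
  case Nil then show ?case by simp
next
  case (Cons k xs)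
  have "\<forall>y. (Sx k \<circ> f0) (J y) = J ((Sy k \<circ> g0) y)" using Cons.prems by simp
  then show ?case using Cons.IH[of "Sx k \<circ> f0" "Sy k \<circ> g0"] Cons.prems by simp
qed

lemma fold_ids:
  assumes "\<forall>k\<in>set xs. Sx k = id"
  shows "fold (\<lambda>k f. Sx k \<circ> f) xs f0 = f0"
  using assms by (induction xs arbitrary: f0) auto

definition dur :: "real \<Rightarrow> nat \<Rightarrow> real \<Rightarrow> real \<Rightarrow> nat \<Rightarrow> real" where
  "dur T n t s m = max 0 (min t (grid T n (Suc m)) - max s (grid T n m))"

lemma Uapp_dur: "Uapp T S' n t s = fold (\<lambda>m f. S' (grid T n m) (dur T n t s m) \<circ> f) [0..<n] id"
  by (simp add: Uapp_def dur_def)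

lemma grid_mono: "T \<ge> 0 \<Longrightarrow> k \<le> l \<Longrightarrow> grid T n k \<le> grid T n l"
  by (simp add: grid_def divide_right_mono mult_right_mono)

lemma grid_Suc: "n > 0 \<Longrightarrow> grid T n (Suc k) = grid T n k + T / real n"
  by (simp add: grid_def field_simps)

lemma grid_range: "T \<ge> 0 \<Longrightarrow> k \<le> n \<Longrightarrow> n > 0 \<Longrightarrow> grid T n k \<in> {0..T}"
  by (auto simp: grid_def field_simps intro: mult_left_mono)

lemma dur_nonneg: "dur T n t s m \<ge> 0" by (simp add: dur_def)

lemma Uapp_refl:
  assumes "\<forall>k<n. S' (grid T n k) 0 = id"
  shows "Uapp T S' n s s = id"
  unfolding Uapp_dur
proof (rule fold_ids)
  show "\<forall>k\<in>set [0..<n]. S' (grid T n k) (dur T n s s k) = id"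
  proof
    fix k assume "k \<in> set [0..<n]"
    moreover have "dur T n s s k = 0" by (simp add: dur_def)
    ultimately show "S' (grid T n k) (dur T n s s k) = id" using assms by simp
  qed
qed

lemma Uapp_fact:
  assumes T: "T > 0" and m: "m < n" and a: "a = max r (grid T n m)" and s: "a \<le> s" "s \<le> grid T n (Suc m)"
    and S0: "\<forall>k<n. S' (grid T n k) 0 = id"
  shows "Uapp T S' n s r = S' (grid T n m) (s - a) \<circ> Uapp T S' n a r"
proof -
  have split: "[0..<n] = [0..<m] @ [m] @ [Suc m..<n]"
  proof -
    have "[0..<n] = [0..<m] @ [m..<n]" using upt_add_eq_append[of 0 m "n - m"] m by simp
    also have "[m..<n] = [m] @ [Suc m..<n]" using m by (simp add: upt_conv_Cons)
    finally show ?thesis .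
  qed
  let ?G = "\<lambda>x. (\<lambda>k f. S' (grid T n k) (dur T n x r k) \<circ> f)"
  have low: "fold (?G s) [0..<m] id = fold (?G a) [0..<m] id"
  proof (rule fold_cong[OF refl refl])
    fix k assume "k \<in> set [0..<m]"
    then have k: "k < m" by simp
    have "grid T n (Suc k) \<le> grid T n m" using k T by (intro grid_mono) auto
    then have "grid T n (Suc k) \<le> a" "grid T n (Suc k) \<le> s" using a s by auto
    then have "dur T n s r k = dur T n a r k" by (simp add: dur_def min_def)
    then show "?G s k = ?G a k" by simp
  qed
  have high: "fold (?G x) [Suc m..<n] f0 = f0" if "x \<le> grid T n (Suc m)" for x f0
  proof (rule fold_ids, intro ballI)
    fix k assume "k \<in> set [Suc m..<n]"
    then have k: "Suc m \<le> k" "k < n" by auto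
    have "grid T n (Suc m) \<le> grid T n k" using k T by (intro grid_mono) auto
    then have "dur T n x r k = 0" using that by (simp add: dur_def)
    then show "S' (grid T n k) (dur T n x r k) = id" using S0 k by simp
  qed
  have dm1: "dur T n s r m = s - a" using a s by (simp add: dur_def)
  have dm2: "dur T n a r m = 0" using a by (simp add: dur_def)
  have as: "a \<le> grid T n (Suc m)" using s by simp
  have e1: "Uapp T S' n s r = fold (?G s) [Suc m..<n] (S' (grid T n m) (s - a) \<circ> fold (?G s) [0..<m] id)"
    unfolding Uapp_dur split fold_append by (simp add: dm1)
  have e2: "Uapp T S' n a r = fold (?G a) [Suc m..<n] (S' (grid T n m) 0 \<circ> fold (?G a) [0..<m] id)"
    unfolding Uapp_dur split fold_append by (simp add: dm2)
  show ?thesis unfolding e1 e2 high[OF s(2)] high[OF as] low using S0 m by simp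
qed


lemma resolvent_is:
  assumes "is_resolvent D A lam R"
  shows "is_resolvent D A lam (resolvent D A lam)"
proof -
  have uniq: "R' = R" if "is_resolvent D A lam R'" for R'
  proof
    fix x
    have "R' x \<in> D" "A (R' x) + lam *\<^sub>R R' x = x" using that unfolding is_resolvent_def by auto
    then have "R (A (R' x) + lam *\<^sub>R R' x) = R' x" using assms unfolding is_resolvent_def by auto
    then show "R' x = R x" using \<open>A (R' x) + lam *\<^sub>R R' x = x\<close> by simp
  qed
  have "resolvent D A lam = R" unfolding resolvent_def
    by (rule the_equality[where P="\<lambda>R. is_resolvent D A lam R", OF assms uniq])
  then show ?thesis using assms by simp
qed

lemma norm_onorm_le:
  assumes "bounded_linear f" "onorm f \<le> c"
  shows "norm (f x) \<le> c * norm x"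
  using onorm[OF assms(1), of x] mult_right_mono[OF assms(2) norm_ge_zero[of x]] by simp

lemma stable_kato:
  fixes SG :: "real \<Rightarrow> real \<Rightarrow> 'a::banach \<Rightarrow> 'a"
  assumes st: "stable T DP AP"
    and gen: "\<And>\<tau>. \<tau> \<in> {0..T} \<Longrightarrow> neg_generator (DG \<tau>) (AG \<tau>) (SG \<tau>)"
    and part: "\<And>\<tau> v. \<tau> \<in> {0..T} \<Longrightarrow> v \<in> DG \<tau> \<Longrightarrow> v \<in> DP \<tau> \<and> AP \<tau> v = AG \<tau> v"
  shows "\<exists>\<omega> M. kato_ctx SG DG AG (\<lambda>\<tau> m. resolvent (DP \<tau>) (AP \<tau>) m) {0..T} \<omega> M"
proof -
  obtain M \<omega> where M: "M \<ge> 1"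
    and ex: "\<forall>lam>\<omega>. \<forall>t\<in>{0..T}. \<exists>R. is_resolvent (DP t) (AP t) lam R"
    and bd: "\<forall>lam>\<omega>. \<forall>ts. sorted ts \<and> set ts \<subseteq> {0..T} \<longrightarrow>
        onorm (res_prod DP AP lam ts) \<le> M / (lam - \<omega>) ^ length ts"
    using st unfolding stable_def by blast
  define \<omega>' where "\<omega>' = max \<omega> 1"
  let ?RR = "\<lambda>\<tau> m. resolvent (DP \<tau>) (AP \<tau>) m"
  have isr: "is_resolvent (DP \<tau>) (AP \<tau>) m (?RR \<tau> m)" if "\<tau> \<in> {0..T}" "m > \<omega>'" for \<tau> m
  proof -
    have "\<omega> \<le> \<omega>'" unfolding \<omega>'_def by (rule max.cobounded1)
    then have mw: "m > \<omega>" using that(2) by linarith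
    have "\<exists>R. is_resolvent (DP \<tau>) (AP \<tau>) m R" using ex mw that(1) by simp
    then obtain R where "is_resolvent (DP \<tau>) (AP \<tau>) m R" ..
    then show ?thesis by (rule resolvent_is)
  qed
  have f2: "0 < \<omega>'" unfolding \<omega>'_def by (rule less_le_trans[OF zero_less_one max.cobounded2])
  have f3: "0 \<le> M" using M by simp
  have f4: "bounded_linear (?RR \<tau> m)" if "\<tau> \<in> {0..T}" "\<omega>' < m" for \<tau> m
    using isr[OF that] unfolding is_resolvent_def by (rule conjunct1)
  have f5: "?RR \<tau> m (AG \<tau> v + m *\<^sub>R v) = v" if a: "\<tau> \<in> {0..T}" "\<omega>' < m" "v \<in> DG \<tau>" for \<tau> m v
  proof -
    have vin: "v \<in> DP \<tau>" and e: "AP \<tau> v = AG \<tau> v" using part[OF a(1,3)] by auto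
    have h: "\<forall>x\<in>DP \<tau>. ?RR \<tau> m (AP \<tau> x + m *\<^sub>R x) = x"
      using isr[OF a(1,2)] unfolding is_resolvent_def by simp
    from bspec[OF h vin] show ?thesis unfolding e .
  qed
  have f6: "norm (fold (\<lambda>t f. ?RR t m \<circ> f) ts id x) \<le> M / (m - \<omega>') ^ length ts * norm x"
    if m: "\<omega>' < m" and s: "sorted ts" and ss: "set ts \<subseteq> {0..T}" for m ts x
  proof -
    have "\<omega> \<le> \<omega>'" unfolding \<omega>'_def by (rule max.cobounded1)
    then have mw: "m > \<omega>" using m by linarith
    have bl: "bounded_linear (res_prod DP AP m ts)"
      unfolding res_prod_def
    proof (rule fold_bl)
      show "\<forall>t\<in>set ts. bounded_linear (?RR t m)" using f4 m ss by blast
    qed (simp add: id_def bounded_linear_ident)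
    have "onorm (res_prod DP AP m ts) \<le> M / (m - \<omega>) ^ length ts" using bd mw s ss by simp
    also have "\<dots> \<le> M / (m - \<omega>') ^ length ts"
    proof -
      have "0 < m - \<omega>'" using m by simp
      moreover have "m - \<omega>' \<le> m - \<omega>" using \<open>\<omega> \<le> \<omega>'\<close> by linarith
      ultimately have "(m - \<omega>') ^ length ts \<le> (m - \<omega>) ^ length ts" by (intro power_mono) auto
      moreover have "0 < (m - \<omega>) ^ length ts * (m - \<omega>') ^ length ts"
        using \<open>0 < m - \<omega>'\<close> mw by simp
      ultimately show ?thesis using M by (intro divide_left_mono) auto
    qed
    finally have "norm (res_prod DP AP m ts x) \<le> M / (m - \<omega>') ^ length ts * norm x"
      by (rule norm_onorm_le[OF bl])
    then show ?thesis by (simp add: res_prod_def)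
  qed
  have "kato_ctx SG DG AG ?RR {0..T} \<omega>' M"
    by (rule kato_ctx.intro[OF gen f2 f3 f4 f5 f6])
  then show ?thesis by (intro exI)
qed


locale main_ctx =
  fixes J :: "'y::banach \<Rightarrow> 'x::banach" and T :: real and D :: "real \<Rightarrow> 'x set"
    and A :: "real \<Rightarrow> 'x \<Rightarrow> 'x" and S :: "real \<Rightarrow> real \<Rightarrow> 'x \<Rightarrow> 'x" and U :: "real \<Rightarrow> real \<Rightarrow> 'x \<Rightarrow> 'x"
  assumes J_lin: "bounded_linear J" and J_inj: "inj J" and T_pos: "T > 0"
    and A_gen: "\<forall>t\<in>{0..T}. neg_generator (D t) (A t) (S t)"
    and H2a: "\<forall>t\<in>{0..T}. admissible J (S t)"
    and H2b: "stable T (\<lambda>t. part_dom J (D t) (A t)) (\<lambda>t. part_op J (A t))"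
    and H3a: "\<forall>t\<in>{0..T}. \<forall>y. J y \<in> D t"
    and H3b: "\<forall>t\<in>{0..T}. bounded_linear (\<lambda>y. A t (J y))"
    and H3c: "\<forall>t\<in>{0..T}. ((\<lambda>s. onorm (\<lambda>y. A s (J y) - A t (J y))) \<longlongrightarrow> 0) (at t within {0..T})"
    and U_lin: "\<forall>s t. 0 \<le> s \<and> s \<le> t \<and> t \<le> T \<longrightarrow> bounded_linear (U t s)"
    and U_cont: "\<forall>x. continuous_on {(t, s). 0 \<le> s \<and> s \<le> t \<and> t \<le> T} (\<lambda>(t, s). U t s x)"
    and U_id: "\<forall>s\<in>{0..T}. U s s = id"
    and U_bound: "\<exists>M \<omega>. \<forall>s t. 0 \<le> s \<and> s \<le> t \<and> t \<le> T \<longrightarrow> onorm (U t s) \<le> M * exp (\<omega> * (t - s))"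
    and U_ds: "\<forall>t\<in>{0..T}. \<forall>s\<in>{0..t}. \<forall>g. ((\<lambda>s'. U t s' (J g)) has_vector_derivative U t s (A s (J g)))
                                  (at s within {0..t})"
begin

definition SYc :: "real \<Rightarrow> real \<Rightarrow> 'y \<Rightarrow> 'y" where
  "SYc t = (SOME SY. C0_semigroup SY \<and> (\<forall>\<tau>\<ge>0. \<forall>y. J (SY \<tau> y) = S t \<tau> (J y)))"

lemma SYc:
  assumes t: "t \<in> {0..T}"
  shows "C0_semigroup (SYc t)" "\<And>\<tau> y. \<tau> \<ge> 0 \<Longrightarrow> J (SYc t \<tau> y) = S t \<tau> (J y)"
proof -
  have "\<exists>SY. C0_semigroup SY \<and> (\<forall>\<tau>\<ge>0. \<forall>y. J (SY \<tau> y) = S t \<tau> (J y))"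
    using H2a t unfolding admissible_def by simp
  from someI_ex[OF this]
  have *: "C0_semigroup (SYc t) \<and> (\<forall>\<tau>\<ge>0. \<forall>y. J (SYc t \<tau> y) = S t \<tau> (J y))"
    unfolding SYc_def .
  then show "C0_semigroup (SYc t)" by (rule conjunct1)
  fix \<tau> :: real and y assume "\<tau> \<ge> 0"
  then show "J (SYc t \<tau> y) = S t \<tau> (J y)" using * by simp
qed

lemma SYc_gen: "t \<in> {0..T} \<Longrightarrow> neg_generator (gdom (SYc t)) (gop (SYc t)) (SYc t)"
  by (rule gen_of_C0[OF SYc(1)])

lemma part_rel:
  assumes t: "t \<in> {0..T}" and v: "v \<in> gdom (SYc t)"
  shows "v \<in> part_dom J (D t) (A t) \<and> part_op J (A t) v = gop (SYc t) v"
proof -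
  interpret J: bounded_linear J by (rule J_lin)
  have g: "neg_generator (D t) (A t) (S t)" using A_gen t by simp
  have q: "(quot (SYc t) v \<longlongrightarrow> - gop (SYc t) v) (at_right 0)" by (rule genD[OF SYc_gen[OF t] v])
  have "\<forall>\<^sub>F h in at_right (0::real). J (quot (SYc t) v h) = quot (S t) (J v) h"
  proof -
    have "\<forall>\<^sub>F h in at_right (0::real). h > 0" by (simp add: eventually_at_right_less)
    then show ?thesis
    proof eventually_elim
      case (elim h)
      have "J (SYc t h v) = S t h (J v)" using SYc(2)[OF t] elim by simp
      then show ?case by (simp add: quot_def J.scale J.diff)
    qed
  qed
  moreover have "((\<lambda>h. J (quot (SYc t) v h)) \<longlongrightarrow> J (- gop (SYc t) v)) (at_right 0)"
    by (rule J.tendsto[OF q])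
  ultimately have "(quot (S t) (J v) \<longlongrightarrow> - J (gop (SYc t) v)) (at_right 0)"
    by (simp add: tendsto_cong J.neg)
  from genI[OF g this] have "J v \<in> D t" "A t (J v) = J (gop (SYc t) v)" by auto
  then show ?thesis unfolding part_dom_def part_op_def using J_inj by (simp add: inv_f_f)
qed

lemma kato_Y: "\<exists>\<omega> M. kato_ctx SYc (\<lambda>t. gdom (SYc t)) (\<lambda>t. gop (SYc t))
    (\<lambda>\<tau> m. resolvent (part_dom J (D \<tau>) (A \<tau>)) (part_op J (A \<tau>)) m) {0..T} \<omega> M"
  by (rule stable_kato[OF H2b SYc_gen part_rel])

lemma lift_gen:
  assumes "\<forall>k\<in>set xs. grid T n k \<in> {0..T} \<and> d k \<ge> 0"
  shows "fold (\<lambda>k f. S (grid T n k) (d k) \<circ> f) xs id (J y) = J (fold (\<lambda>k f. SYc (grid T n k) (d k) \<circ> f) xs id y)"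
  by (rule fold_lift) (use assms SYc(2) in auto)

lemma Uapp_lift:
  assumes n: "n \<ge> 1"
  shows "Uapp T S n t s (J y) = J (Uapp T SYc n t s y)"
  unfolding Uapp_dur
  by (rule lift_gen) (use n T_pos grid_range dur_nonneg in auto)

lemma dur_le: "n > 0 \<Longrightarrow> dur T n t s m \<le> T / real n"
proof -
  assume n: "n > 0"
  have "min t (grid T n (Suc m)) - max s (grid T n m) \<le> grid T n (Suc m) - grid T n m" by simp
  also have "\<dots> = T / real n" using grid_Suc[OF n] by simp
  finally show ?thesis unfolding dur_def using T_pos by simp
qed

lemma KY: "\<exists>KY\<ge>0. \<forall>n\<ge>1. \<forall>t s y. norm (Uapp T SYc n t s y) \<le> KY * norm y"
proof -
  obtain \<omega> M where K: "kato_ctx SYc (\<lambda>t. gdom (SYc t)) (\<lambda>t. gop (SYc t))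
    (\<lambda>\<tau> m. resolvent (part_dom J (D \<tau>) (A \<tau>)) (part_op J (A \<tau>)) m) {0..T} \<omega> M"
    using kato_Y by blast
  interpret K: kato_ctx SYc "\<lambda>t. gdom (SYc t)" "\<lambda>t. gop (SYc t)"
    "\<lambda>\<tau> m. resolvent (part_dom J (D \<tau>) (A \<tau>)) (part_op J (A \<tau>)) m" "{0..T}" \<omega> M by (rule K)
  have bnd: "norm (Uapp T SYc n t s y) \<le> (M * exp (2 * \<omega> * T)) * norm y" if n: "n \<ge> 1" for n t s y
  proof -
    have np: "n > 0" using n by simp
    define ps where "ps = map (\<lambda>m. (grid T n m, dur T n t s m)) [0..<n]"
    have eq: "Uapp T SYc n t s = K.P ps"
      unfolding K.P_def ps_def Uapp_dur fold_map by (simp add: o_def)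
    have I: "set (map fst ps) \<subseteq> {0..T}" using grid_range T_pos np by (auto simp: ps_def)
    have srt: "sorted (map fst ps)"
    proof -
      have "map fst ps = map (grid T n) [0..<n]" by (simp add: ps_def)
      moreover have "sorted (map (grid T n) [0..<n])"
        unfolding sorted_iff_nth_mono using grid_mono T_pos by auto
      ultimately show ?thesis by simp
    qed
    have d: "\<forall>p\<in>set ps. snd p \<ge> 0" using dur_nonneg by (auto simp: ps_def)
    have sumT: "sum_list (map snd ps) \<le> T"
    proof -
      have "sum_list (map snd ps) = (\<Sum>m\<in>{0..<n}. dur T n t s m)"
        by (simp add: ps_def interv_sum_list_conv_sum_set_nat o_def)
      also have "\<dots> \<le> real (card {0..<n}) * (T / real n)"
        by (rule sum_bounded_above) (rule dur_le[OF np])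
      also have "\<dots> = T" using np by simp
      finally show ?thesis .
    qed
    have "norm (K.P ps y) \<le> M * exp (2 * \<omega> * sum_list (map snd ps)) * norm y"
      by (rule K.P_bound[OF I srt d])
    also have "\<dots> \<le> M * exp (2 * \<omega> * T) * norm y"
      using K.Mp K.wp sumT by (intro mult_right_mono mult_left_mono) auto
    finally show ?thesis unfolding eq .
  qed
  show ?thesis
    by (rule exI[of _ "M * exp (2 * \<omega> * T)"]) (use bnd K.Mp in auto)
qed

end


context main_ctx begin

lemma Aapp_grid:
  assumes n: "n > 0" and s: "grid T n m < s" "s < grid T n (Suc m)"
  shows "Aapp T A n s = A (grid T n m)"
proof -
  have np: "real n > 0" using n by simp
  have "\<lfloor>real n * s / T\<rfloor> = int m"
  proof (rule floor_unique)
    have "real m * T / real n < s" using s(1) by (simp add: grid_def)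
    then have "real m * T < s * real n" using np by (simp add: field_simps)
    then show "real_of_int (int m) \<le> real n * s / T" using T_pos by (simp add: field_simps)
    have "s < real (Suc m) * T / real n" using s(2) by (simp add: grid_def)
    then have "s * real n < real (Suc m) * T" using np by (simp add: field_simps)
    then show "real n * s / T < real_of_int (int m) + 1" using T_pos by (simp add: field_simps)
  qed
  then show ?thesis unfolding Aapp_def grid_def by (simp add: field_simps)
qed

lemma U_cont_t:
  assumes t: "t \<in> {0..T}" and s: "s \<in> {0..t}"
  shows "((\<lambda>s'. U t s' x) \<longlongrightarrow> U t s x) (at s within {0..t})"
proof -
  have "continuous_on {0..t} (\<lambda>s'. (\<lambda>(t, s). U t s x) (t, s'))"
  proof (rule continuous_on_compose2[OF U_cont[rule_format, of x]])
    show "continuous_on {0..t} (Pair t)" by (intro continuous_intros)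
    show "Pair t ` {0..t} \<subseteq> {(t, s). 0 \<le> s \<and> s \<le> t \<and> t \<le> T}" using t by auto
  qed
  then show ?thesis using s unfolding continuous_on_def by simp
qed

lemma piece:
  assumes n: "n \<ge> 1" and m: "m < n" and rt: "0 \<le> r" "r \<le> t" "t \<le> T"
    and a: "a = max r (grid T n m)" and b: "b = min t (grid T n (Suc m))" and ab: "a \<le> b"
    and KU: "KU \<ge> 0" "\<And>s t x. 0 \<le> s \<Longrightarrow> s \<le> t \<Longrightarrow> t \<le> T \<Longrightarrow> norm (U t s x) \<le> KU * norm x"
    and KY: "\<And>s y. norm (Uapp T SYc n s r y) \<le> KY * norm y"
    and Dl: "\<And>s. grid T n m < s \<Longrightarrow> s < grid T n (Suc m) \<Longrightarrow>
               onorm (\<lambda>y. A s (J y) - Aapp T A n s (J y)) \<le> \<Delta>"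
  shows "norm (U t b (Uapp T S n b r (J g)) - U t a (Uapp T S n a r (J g))) \<le> (KU * \<Delta> * (KY * norm g)) * (b - a)"
proof -
  have np: "n > 0" using n by simp
  define gm where "gm = grid T n m"
  have gm: "gm \<in> {0..T}" using grid_range[of T m n] T_pos m np by (simp add: gm_def)
  have gS: "grid T n (Suc m) \<in> {0..T}" using grid_range[of T "Suc m" n] T_pos m np by simp
  have a0: "0 \<le> a" "r \<le> a" "gm \<le> a" using a rt by (auto simp: gm_def)
  have bt: "b \<le> t" "b \<le> grid T n (Suc m)" using b by auto
  have genm: "neg_generator (D gm) (A gm) (S gm)" using A_gen gm by simp
  have S0: "\<forall>k<n. S (grid T n k) 0 = id"
  proof (intro allI impI)
    fix k assume "k < n"
    then have "grid T n k \<in> {0..T}" using grid_range[of T k n] T_pos np by simp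
    then show "S (grid T n k) 0 = id" using A_gen C0D(2)[OF gen_C0] by blast
  qed
  define ya where "ya = Uapp T SYc n a r g"
  define z where "z = J ya"
  have zD: "z \<in> D gm" using H3a gm by (simp add: z_def)
  have za: "Uapp T S n a r (J g) = z" using Uapp_lift[OF n] by (simp add: z_def ya_def)
  define w where "w s = S gm (s - a) z" for s
  have wfact: "Uapp T S n s r (J g) = w s" if "a \<le> s" "s \<le> b" for s
    using Uapp_fact[where S'=S, OF T_pos m a that(1) order_trans[OF that(2) bt(2)] S0] za
    by (simp add: w_def gm_def)
  define ys where "ys s = Uapp T SYc n s r g" for s
  have wJ: "w s = J (ys s)" if "a \<le> s" "s \<le> b" for s
    using wfact[OF that] Uapp_lift[OF n] by (simp add: ys_def)
  have ysb: "norm (ys s) \<le> KY * norm g" for s using KY by (simp add: ys_def)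
  define \<phi> where "\<phi> s = U t s (w s)" for s
  define \<phi>' where "\<phi>' s = U t s (A s (w s)) + U t s (- A gm (w s))" for s
  have dphi: "(\<phi> has_vector_derivative \<phi>' s) (at s within {a..b})" if s: "s \<in> {a..b}" for s
  proof -
    have s0t: "s \<in> {0..t}" using s a0 bt by auto
    have tT: "t \<in> {0..T}" using rt by auto
    have wd: "(w has_vector_derivative - A gm (w s)) (at s within {a..b})"
    proof -
      have d1: "((\<lambda>s. s - a) has_vector_derivative 1) (at s within {a..b})"
        by (auto intro!: derivative_eq_intros simp: has_vector_derivative_def has_field_derivative_def[symmetric] has_real_derivative_iff_has_vector_derivative[symmetric])
      have d2: "((\<lambda>\<tau>. S gm \<tau> z) has_vector_derivative - S gm (s - a) (A gm z)) (at (s - a) within (\<lambda>s. s - a) ` {a..b})"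
        by (rule has_vector_derivative_within_subset[OF gen_deriv[OF genm zD]]) (use s in auto)
      have "((\<lambda>\<tau>. S gm \<tau> z) \<circ> (\<lambda>s. s - a) has_vector_derivative 1 *\<^sub>R (- S gm (s - a) (A gm z))) (at s within {a..b})"
        by (rule vector_diff_chain_within[OF d1 d2])
      moreover have "S gm (s - a) (A gm z) = A gm (w s)"
        using gen_invariant(2)[OF genm zD, of "s - a"] s by (simp add: w_def)
      moreover have "w = (\<lambda>x. S gm (x - a) z)" by (simp add: fun_eq_iff w_def)
      ultimately show ?thesis by (simp add: w_def o_def)
    qed
    have Ud: "((\<lambda>s'. U t s' (w s)) has_vector_derivative U t s (A s (w s))) (at s within {a..b})"
    proof -
      have "((\<lambda>s'. U t s' (J (ys s))) has_vector_derivative U t s (A s (J (ys s)))) (at s within {0..t})"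
        using U_ds tT s0t by blast
      then have "((\<lambda>s'. U t s' (J (ys s))) has_vector_derivative U t s (A s (J (ys s)))) (at s within {a..b})"
        by (rule has_vector_derivative_within_subset) (use a0 bt in auto)
      then show ?thesis using wJ[of s] s by simp
    qed
    have Uc: "((\<lambda>s'. U t s' (- A gm (w s))) \<longlongrightarrow> U t s (- A gm (w s))) (at s within {a..b})"
      by (rule tendsto_within_subset[OF U_cont_t[OF tT s0t]]) (use a0 bt in auto)
    show ?thesis unfolding \<phi>_def \<phi>'_def
    proof (rule prod_deriv[OF _ _ Uc Ud wd s])
      fix s' assume "s' \<in> {a..b}"
      then have "0 \<le> s'" "s' \<le> t" using a0 bt by auto
      then show "bounded_linear (U t s')" using U_lin rt by auto
      show "norm (U t s' x) \<le> KU * norm x" for x using KU(2) \<open>0 \<le> s'\<close> \<open>s' \<le> t\<close> rt by auto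
    qed
  qed
  have cphi: "continuous_on {a..b} \<phi>"
    using dphi has_vector_derivative_continuous continuous_on_eq_continuous_within by blast
  have "norm (\<phi> b - \<phi> a) \<le> (KU * \<Delta> * (KY * norm g)) * (b - a)"
  proof (rule mvt_bound[OF ab cphi])
    fix s assume s: "a < s" "s < b"
    show "(\<phi> has_vector_derivative \<phi>' s) (at s within {a..b})" using dphi s by auto
    have sT: "s \<in> {0..T}" using s a0 bt rt by auto
    have gs: "grid T n m < s" "s < grid T n (Suc m)" using s a0 bt by (auto simp: gm_def)
    have Aeq: "Aapp T A n s = A gm" using Aapp_grid[OF np gs] by (simp add: gm_def)
    have bl: "bounded_linear (\<lambda>y. A s (J y) - A gm (J y))"
      using H3b sT gm by (intro bounded_linear_sub) auto
    have "\<phi>' s = U t s (A s (J (ys s)) - A gm (J (ys s)))"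
    proof -
      have "0 \<le> s" "s \<le> t" using s a0 bt by auto
      then interpret L: bounded_linear "U t s" using U_lin rt by auto
      have "w s = J (ys s)" using wJ[of s] s by simp
      then show ?thesis unfolding \<phi>'_def by (simp add: L.diff L.neg L.add)
    qed
    then have n1: "norm (\<phi>' s) \<le> KU * norm (A s (J (ys s)) - A gm (J (ys s)))"
      using KU(2)[of s t] s a0 bt rt by auto
    have n2: "norm (A s (J (ys s)) - A gm (J (ys s))) \<le> onorm (\<lambda>y. A s (J y) - A gm (J y)) * norm (ys s)"
      using onorm[OF bl] by simp
    have n3: "onorm (\<lambda>y. A s (J y) - A gm (J y)) \<le> \<Delta>" using Dl[OF gs] Aeq by simp
    have dn0: "0 \<le> onorm (\<lambda>y. A s (J y) - A gm (J y))" by (rule onorm_pos_le[OF bl])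
    have n4: "onorm (\<lambda>y. A s (J y) - A gm (J y)) * norm (ys s) \<le> \<Delta> * (KY * norm g)"
      using n3 ysb[of s] dn0 by (intro mult_mono) auto
    have "norm (\<phi>' s) \<le> KU * (\<Delta> * (KY * norm g))"
      using n1 mult_left_mono[OF order_trans[OF n2 n4] KU(1)] by linarith
    then show "norm (\<phi>' s) \<le> KU * \<Delta> * (KY * norm g)" by (simp add: mult.assoc)
  qed
  then show ?thesis using wfact[of a] wfact[of b] ab by (simp add: \<phi>_def)
qed

end


context main_ctx begin

definition Bf :: "real \<Rightarrow> 'y \<Rightarrow>\<^sub>L 'x" where "Bf s = Blinfun (\<lambda>y. A s (J y))"

lemma Bf_dist:
  assumes "s \<in> {0..T}" "p \<in> {0..T}"
  shows "norm (Bf s - Bf p) = onorm (\<lambda>y. A s (J y) - A p (J y))"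
  using H3b assms by (simp add: norm_blinfun.rep_eq minus_blinfun.rep_eq Bf_def bounded_linear_Blinfun_apply)

lemma Bf_cont: "continuous_on {0..T} Bf"
  unfolding continuous_on_def
proof
  fix t assume t: "t \<in> {0..T}"
  have "\<forall>\<^sub>F s in at t within {0..T}. onorm (\<lambda>y. A s (J y) - A t (J y)) = norm (Bf s - Bf t)"
    using Bf_dist t by (auto simp: eventually_at_filter)
  moreover have "((\<lambda>s. onorm (\<lambda>y. A s (J y) - A t (J y))) \<longlongrightarrow> 0) (at t within {0..T})"
    using H3c t by simp
  ultimately have "((\<lambda>s. norm (Bf s - Bf t)) \<longlongrightarrow> 0) (at t within {0..T})"
    by (simp add: tendsto_cong)
  then have "((\<lambda>s. Bf s - Bf t) \<longlongrightarrow> 0) (at t within {0..T})" by (simp add: tendsto_norm_zero_iff)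
  then show "(Bf \<longlongrightarrow> Bf t) (at t within {0..T})" by (rule LIM_zero_cancel)
qed

definition pn :: "nat \<Rightarrow> real \<Rightarrow> real" where "pn n s = T * real_of_int \<lfloor>real n * s / T\<rfloor> / real n"

lemma Aapp_pn: "Aapp T A n s = A (pn n s)" by (simp add: Aapp_def pn_def)

lemma pn_props:
  assumes s: "s \<in> {0..T}"
  shows "pn n s \<in> {0..T}" "n > 0 \<Longrightarrow> s - T / real n < pn n s \<and> pn n s \<le> s"
proof -
  show *: "s - T / real n < pn n s \<and> pn n s \<le> s" if n: "n > 0"
  proof -
    have np: "real n > 0" using n by simp
    define x where "x = real n * s / T"
    have f1: "real_of_int \<lfloor>x\<rfloor> \<le> x" by simp
    have f2: "x - 1 < real_of_int \<lfloor>x\<rfloor>" by linarith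
    have "pn n s = T * real_of_int \<lfloor>x\<rfloor> / real n" by (simp add: pn_def x_def)
    moreover have "T * real_of_int \<lfloor>x\<rfloor> / real n \<le> T * x / real n"
      using f1 T_pos np by (intro divide_right_mono mult_left_mono) auto
    moreover have "T * (x - 1) / real n < T * real_of_int \<lfloor>x\<rfloor> / real n"
      using f2 T_pos np by (intro divide_strict_right_mono mult_strict_left_mono) auto
    moreover have "T * x / real n = s" using T_pos np by (simp add: x_def)
    moreover have "T * (x - 1) / real n = s - T / real n" using T_pos np by (simp add: x_def field_simps)
    ultimately show ?thesis by simp
  qed
  show "pn n s \<in> {0..T}"
  proof (cases "n = 0")
    case True then show ?thesis using T_pos by (simp add: pn_def)
  next
    case False
    then have np: "real n > 0" by simp
    have "0 \<le> real n * s / T" using s T_pos by simp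
    then have "0 \<le> real_of_int \<lfloor>real n * s / T\<rfloor>" by simp
    then have "0 \<le> pn n s" using T_pos np by (simp add: pn_def)
    moreover have "pn n s \<le> s" using *[of] False by simp
    ultimately show ?thesis using s by simp
  qed
qed

definition dn :: "nat \<Rightarrow> real \<Rightarrow> real" where
  "dn n s = onorm (\<lambda>y. A s (J y) - Aapp T A n s (J y))"

lemma dn_Bf: "s \<in> {0..T} \<Longrightarrow> dn n s = norm (Bf s - Bf (pn n s))"
  using Bf_dist[of s "pn n s"] pn_props(1)[of s n] by (simp add: dn_def Aapp_pn)

lemma dn_nonneg: "s \<in> {0..T} \<Longrightarrow> dn n s \<ge> 0"
  using dn_Bf by simp

lemma dn_bdd: "bdd_above (dn n ` {0..T})"
proof -
  have "compact (Bf ` {0..T})" by (rule compact_continuous_image[OF Bf_cont compact_Icc])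
  then obtain K where K: "\<forall>x\<in>Bf ` {0..T}. norm x \<le> K" using compact_imp_bounded bounded_iff by metis
  have "dn n s \<le> 2 * K" if s: "s \<in> {0..T}" for s
  proof -
    have "dn n s = norm (Bf s - Bf (pn n s))" by (rule dn_Bf[OF s])
    also have "\<dots> \<le> norm (Bf s) + norm (Bf (pn n s))" by (rule norm_triangle_ineq4)
    also have "\<dots> \<le> 2 * K"
    proof -
      have "norm (Bf s) \<le> K" using K s by blast
      moreover have "norm (Bf (pn n s)) \<le> K" using K pn_props(1)[OF s, of n] by blast
      ultimately show ?thesis by simp
    qed
    finally show ?thesis .
  qed
  then show ?thesis by (intro bdd_aboveI2) 
qed

lemma dist_AAn_eq: "dist_AAn T J A n = (SUP s\<in>{0..T}. dn n s)"
  by (simp add: dist_AAn_def dn_def)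

lemma dn_le_dist: "s \<in> {0..T} \<Longrightarrow> dn n s \<le> dist_AAn T J A n"
  unfolding dist_AAn_eq by (rule cSUP_upper[OF _ dn_bdd])

lemma dist_nonneg: "dist_AAn T J A n \<ge> 0"
  using dn_nonneg[of 0 n] dn_le_dist[of 0 n] T_pos by simp

lemma conj1: "(\<lambda>n. dist_AAn T J A n) \<longlonglongrightarrow> 0"
  unfolding LIMSEQ_iff
proof (intro allI impI)
  fix e :: real assume e: "e > 0"
  have "uniformly_continuous_on {0..T} Bf" by (rule compact_uniformly_continuous[OF Bf_cont compact_Icc])
  then obtain d where d: "d > 0" "\<forall>x\<in>{0..T}. \<forall>x'\<in>{0..T}. dist x' x < d \<longrightarrow> dist (Bf x') (Bf x) < e / 2"
    unfolding uniformly_continuous_on_def using e by (meson half_gt_zero)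
  obtain N :: nat where N: "real N > T / d" using reals_Archimedean2 by blast
  have Np: "N > 0" using N T_pos d by (cases "N = 0") (auto simp: field_simps)
  show "\<exists>no. \<forall>n\<ge>no. norm (dist_AAn T J A n - 0) < e"
  proof (intro exI allI impI)
    fix n assume n: "N \<le> n"
    have np: "n > 0" using n Np by simp
    have Tn: "T / real n < d"
    proof -
      have "T / real n \<le> T / real N" using n Np T_pos by (intro divide_left_mono) auto
      also have "T / real N < d" using N d Np by (simp add: field_simps)
      finally show ?thesis .
    qed
    have "dist_AAn T J A n \<le> e / 2"
      unfolding dist_AAn_eq
    proof (rule cSUP_least)
      show "{0..T} \<noteq> {}" using T_pos by simp
      fix s assume s: "s \<in> {0..T}"
      have p: "pn n s \<in> {0..T}" "s - T / real n < pn n s" "pn n s \<le> s" using pn_props[OF s] np by auto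
      have "dist (pn n s) s < d" using p Tn by (simp add: dist_real_def)
      then have "dist (Bf (pn n s)) (Bf s) < e / 2" using d s p(1) by blast
      then show "dn n s \<le> e / 2" using dn_Bf[OF s] by (simp add: dist_norm norm_minus_commute)
    qed
    then show "norm (dist_AAn T J A n - 0) < e" using dist_nonneg[of n] e by simp
  qed
qed

end


context main_ctx begin

lemma KU_ex: "\<exists>KU\<ge>0. \<forall>s t x. 0 \<le> s \<longrightarrow> s \<le> t \<longrightarrow> t \<le> T \<longrightarrow> norm (U t s x) \<le> KU * norm x"
proof -
  obtain Mu \<omega>u where Mu: "\<forall>s t. 0 \<le> s \<and> s \<le> t \<and> t \<le> T \<longrightarrow> onorm (U t s) \<le> Mu * exp (\<omega>u * (t - s))"
    using U_bound by blast
  define KU where "KU = \<bar>Mu\<bar> * exp (\<bar>\<omega>u\<bar> * T)"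
  have "norm (U t s x) \<le> KU * norm x" if st: "0 \<le> s" "s \<le> t" "t \<le> T" for s t x
  proof (rule norm_onorm_le)
    show "bounded_linear (U t s)" using U_lin st by blast
    have "\<omega>u * (t - s) \<le> \<bar>\<omega>u\<bar> * T"
    proof -
      have "\<omega>u * (t - s) \<le> \<bar>\<omega>u\<bar> * (t - s)" using st by (intro mult_right_mono) auto
      also have "\<dots> \<le> \<bar>\<omega>u\<bar> * T" using st by (intro mult_left_mono) auto
      finally show ?thesis .
    qed
    then have "exp (\<omega>u * (t - s)) \<le> exp (\<bar>\<omega>u\<bar> * T)" by simp
    then have "Mu * exp (\<omega>u * (t - s)) \<le> \<bar>Mu\<bar> * exp (\<bar>\<omega>u\<bar> * T)"
      by (metis abs_ge_self abs_ge_zero exp_ge_zero mult_mono order.trans mult_right_mono)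
    then show "onorm (U t s) \<le> KU" using Mu st unfolding KU_def by (meson order_trans)
  qed
  moreover have "KU \<ge> 0" by (simp add: KU_def)
  ultimately show ?thesis by blast
qed

lemma S0_grid: "n > 0 \<Longrightarrow> \<forall>k<n. S (grid T n k) 0 = id"
proof (intro allI impI)
  fix k assume "n > 0" "k < n"
  then have "grid T n k \<in> {0..T}" using grid_range[of T k n] T_pos by simp
  then show "S (grid T n k) 0 = id" using A_gen C0D(2)[OF gen_C0] by blast
qed

lemma chain:
  assumes n: "n \<ge> 1" and rt: "0 \<le> r" "r \<le> t" "t \<le> T"
    and KU: "KU \<ge> 0" "\<And>s t x. 0 \<le> s \<Longrightarrow> s \<le> t \<Longrightarrow> t \<le> T \<Longrightarrow> norm (U t s x) \<le> KU * norm x"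
    and KY: "\<And>s y. norm (Uapp T SYc n s r y) \<le> KY * norm y"
  shows "norm (Uapp T S n t r (J g) - U t r (J g)) \<le> (KU * dist_AAn T J A n * (KY * norm g)) * (t - r)"
proof -
  have np: "n > 0" using n by simp
  let ?B = "KU * dist_AAn T J A n * (KY * norm g)"
  define \<phi> where "\<phi> s = U t s (Uapp T S n s r (J g))" for s
  define c where "c k = max r (min t (grid T n k))" for k
  have cm: "c k \<le> c (Suc k)" for k
    unfolding c_def using grid_mono[of T k "Suc k" n] T_pos by (auto simp: max_def min_def)
  have Dl: "\<And>s. grid T n m < s \<Longrightarrow> s < grid T n (Suc m) \<Longrightarrow>
      onorm (\<lambda>y. A s (J y) - Aapp T A n s (J y)) \<le> dist_AAn T J A n" if m: "m < n" for m
  proof -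
    fix s assume s: "grid T n m < s" "s < grid T n (Suc m)"
    have "grid T n m \<ge> 0" "grid T n (Suc m) \<le> T"
      using grid_range[of T m n] grid_range[of T "Suc m" n] T_pos m np by auto
    then have "s \<in> {0..T}" using s by auto
    then show "onorm (\<lambda>y. A s (J y) - Aapp T A n s (J y)) \<le> dist_AAn T J A n"
      using dn_le_dist by (simp add: dn_def)
  qed
  have claim: "k \<le> n \<Longrightarrow> norm (\<phi> (c k) - \<phi> r) \<le> ?B * (c k - r)" for k
  proof (induction k)
    case 0
    have "c 0 = r" using rt by (simp add: c_def grid_def)
    then show ?case by simp
  next
    case (Suc k)
    then have k: "k < n" by simp
    have IH: "norm (\<phi> (c k) - \<phi> r) \<le> ?B * (c k - r)" using Suc by simp
    show ?case
    proof (cases "c k = c (Suc k)")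
      case True then show ?thesis using IH by simp
    next
      case False
      then have lt: "c k < c (Suc k)" using cm[of k] by simp
      define a where "a = max r (grid T n k)"
      define b where "b = min t (grid T n (Suc k))"
      have crk: "r \<le> c k" by (simp add: c_def)
      have "c (Suc k) = max r b" by (simp add: c_def b_def)
      then have cb: "c (Suc k) = b" using lt crk by (cases "r \<le> b") auto
      have gk: "grid T n k < t"
      proof (rule ccontr)
        assume "\<not> grid T n k < t"
        then have "c k = t" using rt by (simp add: c_def)
        moreover have "c (Suc k) \<le> t" using rt by (simp add: c_def)
        ultimately show False using lt by simp
      qed
      have ca: "c k = a" using gk unfolding c_def a_def by simp
      have ab: "a \<le> b" using lt ca cb by simp
      have "norm (\<phi> b - \<phi> a) \<le> ?B * (b - a)"
        unfolding \<phi>_def by (rule piece[OF n k rt a_def b_def ab KU KY Dl[OF k]])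
      then have "norm (\<phi> (c (Suc k)) - \<phi> r) \<le> ?B * (b - a) + ?B * (c k - r)"
        using IH ca cb norm_triangle_ineq[of "\<phi> b - \<phi> a" "\<phi> a - \<phi> r"] by simp
      also have "\<dots> = ?B * (c (Suc k) - r)" using ca cb by (simp add: algebra_simps)
      finally show ?thesis .
    qed
  qed
  have cn: "c n = t" using rt np by (simp add: c_def grid_def)
  have "\<phi> t = Uapp T S n t r (J g)" using U_id rt by (simp add: \<phi>_def)
  moreover have "\<phi> r = U t r (J g)" using Uapp_refl[where S'=S, OF S0_grid[OF np]] by (simp add: \<phi>_def)
  ultimately show ?thesis using claim[of n] cn by simp
qed

lemma conj2: "\<exists>C\<ge>0. \<forall>n::nat. n \<ge> 1 \<longrightarrow> (\<forall>r t g. 0 \<le> r \<and> r < t \<and> t \<le> T \<longrightarrow>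
           norm (U t r (J g) - Uapp T S n t r (J g)) \<le> C * norm g * (t - r) * dist_AAn T J A n)"
proof -
  obtain KU where KU: "KU \<ge> 0" "\<forall>s t x. 0 \<le> s \<longrightarrow> s \<le> t \<longrightarrow> t \<le> T \<longrightarrow> norm (U t s x) \<le> KU * norm x"
    using KU_ex by blast
  obtain KY where KY: "KY \<ge> 0" "\<forall>n\<ge>1. \<forall>t s y. norm (Uapp T SYc n t s y) \<le> KY * norm y"
    using KY by blast
  have "norm (U t r (J g) - Uapp T S n t r (J g)) \<le> (KU * KY) * norm g * (t - r) * dist_AAn T J A n"
    if n: "n \<ge> 1" and rt: "0 \<le> r" "r < t" "t \<le> T" for n r t g
  proof -
    have "norm (Uapp T S n t r (J g) - U t r (J g)) \<le> (KU * dist_AAn T J A n * (KY * norm g)) * (t - r)"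
      by (rule chain[OF n rt(1) _ rt(3) KU(1)]) (use rt KU(2) KY(2) n in auto)
    then show ?thesis by (simp add: norm_minus_commute algebra_simps)
  qed
  moreover have "KU * KY \<ge> 0" using KU KY by simp
  ultimately show ?thesis by blast
qed

lemma conj3: "\<forall>\<epsilon>>0. \<exists>N. \<forall>n\<ge>N. \<forall>j\<in>{1..n}. \<forall>r t g.
           grid T n (j - 1) \<le> r \<and> r \<le> t \<and> t \<le> grid T n j \<longrightarrow>
           norm (U t r (J g) - Uapp T S n t r (J g)) \<le> \<epsilon> * (T / real n) * norm g"
proof (intro allI impI)
  fix \<epsilon> :: real assume e: "\<epsilon> > 0"
  obtain C where C: "C \<ge> 0" "\<forall>n::nat. n \<ge> 1 \<longrightarrow> (\<forall>r t g. 0 \<le> r \<and> r < t \<and> t \<le> T \<longrightarrow>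
           norm (U t r (J g) - Uapp T S n t r (J g)) \<le> C * norm g * (t - r) * dist_AAn T J A n)"
    using conj2 by blast
  have "\<epsilon> / (C + 1) > 0" using e C by simp
  then obtain N0 where N0: "\<forall>n\<ge>N0. norm (dist_AAn T J A n - 0) < \<epsilon> / (C + 1)"
    using conj1 unfolding LIMSEQ_iff by blast
  show "\<exists>N. \<forall>n\<ge>N. \<forall>j\<in>{1..n}. \<forall>r t g.
           grid T n (j - 1) \<le> r \<and> r \<le> t \<and> t \<le> grid T n j \<longrightarrow>
           norm (U t r (J g) - Uapp T S n t r (J g)) \<le> \<epsilon> * (T / real n) * norm g"
  proof (intro exI[of _ "max N0 1"] allI impI ballI)
    fix n j :: nat and r t :: real and g :: 'y
    assume n: "max N0 1 \<le> n" and j: "j \<in> {1..n}"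
      and rt: "grid T n (j - 1) \<le> r \<and> r \<le> t \<and> t \<le> grid T n j"
    have n1: "n \<ge> 1" and nN: "n \<ge> N0" using n by auto
    have np: "n > 0" using n1 by simp
    have Cd: "C * dist_AAn T J A n \<le> \<epsilon>"
    proof -
      have d: "dist_AAn T J A n < \<epsilon> / (C + 1)" using N0 nN dist_nonneg[of n] by auto
      have "C * dist_AAn T J A n \<le> (C + 1) * dist_AAn T J A n" using dist_nonneg[of n] by (simp add: distrib_right)
      also have "\<dots> \<le> (C + 1) * (\<epsilon> / (C + 1))" using d C by (intro mult_left_mono) auto
      also have "\<dots> = \<epsilon>" using C by simp
      finally show ?thesis .
    qed
    have "grid T n (j - 1) \<in> {0..T}" using grid_range[of T "j - 1" n] T_pos np j by auto
    then have r0: "0 \<le> r" using rt by auto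
    have tT: "t \<le> T" using rt grid_range[of T j n] T_pos np j by auto
    have len: "t - r \<le> T / real n"
    proof -
      have "grid T n (Suc (j - 1)) = grid T n (j - 1) + T / real n" by (rule grid_Suc[OF np])
      moreover have "Suc (j - 1) = j" using j by simp
      ultimately have "grid T n j = grid T n (j - 1) + T / real n" by simp
      then show ?thesis using rt by simp
    qed
    have rhs0: "0 \<le> \<epsilon> * (T / real n) * norm g" using e T_pos by simp
    show "norm (U t r (J g) - Uapp T S n t r (J g)) \<le> \<epsilon> * (T / real n) * norm g"
    proof (cases "r = t")
      case True
      have "U t t = id" using U_id r0 tT True by simp
      moreover have "Uapp T S n t t = id" by (rule Uapp_refl[where S'=S, OF S0_grid[OF np]])
      ultimately show ?thesis using True rhs0 by simp
    next
      case False
      then have "r < t" using rt by simp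
      then have "norm (U t r (J g) - Uapp T S n t r (J g)) \<le> C * norm g * (t - r) * dist_AAn T J A n"
        using C(2) n1 r0 tT by blast
      also have "\<dots> = norm g * (t - r) * (C * dist_AAn T J A n)" by (simp add: algebra_simps)
      also have "\<dots> \<le> norm g * (T / real n) * \<epsilon>"
        using len Cd \<open>r < t\<close> dist_nonneg[of n] C T_pos by (intro mult_mono) auto
      finally show ?thesis by (simp add: algebra_simps)
    qed
  qed
qed

end


theorem theorem4p1:
  fixes J :: "'y::banach \<Rightarrow> 'x::banach"
    and ciX :: "'x \<Rightarrow> 'x" and ciY :: "'y \<Rightarrow> 'y"
    and T :: real
    and D :: "real \<Rightarrow> 'x set" and A :: "real \<Rightarrow> 'x \<Rightarrow> 'x"
    and S :: "real \<Rightarrow> real \<Rightarrow> 'x \<Rightarrow> 'x"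
    and U :: "real \<Rightarrow> real \<Rightarrow> 'x \<Rightarrow> 'x"
  assumes cX: "complex_structure ciX" and cY: "complex_structure ciY"
    and J_clin: "bounded_linear J" "\<forall>y. J (ciY y) = ciX (J y)"
    and J_inj: "inj J" and J_dense: "closure (range J) = UNIV"
    and T_pos: "T > 0"
    and A_clin: "\<forall>t\<in>{0..T}. \<forall>x\<in>D t. ciX x \<in> D t \<and> A t (ciX x) = ciX (A t x)"
    and A_gen: "\<forall>t\<in>{0..T}. neg_generator (D t) (A t) (S t)"
    and H1: "stable T D A"
    and H2a: "\<forall>t\<in>{0..T}. admissible J (S t)"
    and H2b: "stable T (\<lambda>t. part_dom J (D t) (A t)) (\<lambda>t. part_op J (A t))"
    and H3a: "\<forall>t\<in>{0..T}. \<forall>y. J y \<in> D t"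
    and H3b: "\<forall>t\<in>{0..T}. bounded_linear (\<lambda>y. A t (J y))"
    and H3c: "\<forall>t\<in>{0..T}. ((\<lambda>s. onorm (\<lambda>y. A s (J y) - A t (J y))) \<longlongrightarrow> 0) (at t within {0..T})"
    and U_lin: "\<forall>s t. 0 \<le> s \<and> s \<le> t \<and> t \<le> T \<longrightarrow> bounded_linear (U t s)"
    and U_cont: "\<forall>x. continuous_on {(t, s). 0 \<le> s \<and> s \<le> t \<and> t \<le> T} (\<lambda>(t, s). U t s x)"
    and U_id: "\<forall>s\<in>{0..T}. U s s = id"
    and U_bound: "\<exists>M \<omega>. \<forall>s t. 0 \<le> s \<and> s \<le> t \<and> t \<le> T \<longrightarrow>
                     onorm (U t s) \<le> M * exp (\<omega> * (t - s))"
    and U_comp: "\<forall>r s t. 0 \<le> r \<and> r \<le> s \<and> s \<le> t \<and> t \<le> T \<longrightarrow> U t r = U t s \<circ> U s r"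
    and U_dt: "\<forall>s\<in>{0..T}. \<forall>g. ((\<lambda>t. U t s (J g)) has_vector_derivative (- A s (J g)))
                                  (at s within {s..T})"
    and U_ds: "\<forall>t\<in>{0..T}. \<forall>s\<in>{0..t}. \<forall>g. ((\<lambda>s'. U t s' (J g)) has_vector_derivative U t s (A s (J g)))
                                  (at s within {0..t})"
  shows "((\<lambda>n. dist_AAn T J A n) \<longlonglongrightarrow> 0)
    \<and> (\<exists>C. \<forall>n::nat. n \<ge> 1 \<longrightarrow> (\<forall>r t g. 0 \<le> r \<and> r < t \<and> t \<le> T \<longrightarrow>
           norm (U t r (J g) - Uapp T S n t r (J g)) \<le> C * norm g * (t - r) * dist_AAn T J A n))
    \<and> (\<forall>\<epsilon>>0. \<exists>N. \<forall>n\<ge>N. \<forall>j\<in>{1..n}. \<forall>r t g.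
           grid T n (j - 1) \<le> r \<and> r \<le> t \<and> t \<le> grid T n j \<longrightarrow>
           norm (U t r (J g) - Uapp T S n t r (J g)) \<le> \<epsilon> * (T / real n) * norm g)"
proof -
  interpret main_ctx J T D A S U
    by (rule main_ctx.intro[OF J_clin(1) J_inj T_pos A_gen H2a H2b H3a H3b H3c U_lin U_cont U_id U_bound U_ds])
  obtain C where C: "C \<ge> 0" "\<forall>n::nat. n \<ge> 1 \<longrightarrow> (\<forall>r t g. 0 \<le> r \<and> r < t \<and> t \<le> T \<longrightarrow>
           norm (U t r (J g) - Uapp T S n t r (J g)) \<le> C * norm g * (t - r) * dist_AAn T J A n)"
    using conj2 by blast
  show ?thesis
  proof (intro conjI)
    show "(\<lambda>n. dist_AAn T J A n) \<longlonglongrightarrow> 0" by (rule conj1)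
    show "\<exists>C. \<forall>n::nat. n \<ge> 1 \<longrightarrow> (\<forall>r t g. 0 \<le> r \<and> r < t \<and> t \<le> T \<longrightarrow>
           norm (U t r (J g) - Uapp T S n t r (J g)) \<le> C * norm g * (t - r) * dist_AAn T J A n)"
      using C(2) by (rule exI)
    show "\<forall>\<epsilon>>0. \<exists>N. \<forall>n\<ge>N. \<forall>j\<in>{1..n}. \<forall>r t g.
           grid T n (j - 1) \<le> r \<and> r \<le> t \<and> t \<le> grid T n j \<longrightarrow>
           norm (U t r (J g) - Uapp T S n t r (J g)) \<le> \<epsilon> * (T / real n) * norm g"
      by (rule conj3)
  qed
qed

end
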